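(* Let $m,n$ be integers with $m,n\ge 300$, and let $e$ be an integer with $0\le e<m$. Let $T(m,n,e)$ be the closed triangle in $\mathbb{R}^2$ with vertices $(0,0)$, $(n,0)$ and $(e,m)$, and let $\mathsf N(m,n,e)$ be the number of primitive lattice points in the interior of $T(m,n,e)$. Then $\mathsf N(m,n,e)>\frac12\,\mathrm{Area}\bigl(T(m,n,e)\bigr)$.
   Context: A lattice point is a point $(x,y)\in\mathbb{Z}^2$; it is primitive if $\gcd(x,y)=1$. *)

theory Defs
  imports "HOL-Analysis.Analysis"
begin

definition tri :: "int \<Rightarrow> int \<Rightarrow> int \<Rightarrow> (real \<times> real) set" where
  "tri m n e = convex hull {(0, 0), (real_of_int n, 0), (real_of_int e, real_of_int m)}"

definition Nprim :: "int \<Rightarrow> int \<Rightarrow> int \<Rightarrow> nat" where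
  "Nprim m n e = card {(x :: int, y :: int). gcd x y = 1 \<and>
      (real_of_int x, real_of_int y) \<in> interior (tri m n e)}"

end

theory Submission
  imports Defs
begin

definition Op :: "int \<Rightarrow> int \<Rightarrow> int \<Rightarrow> (real \<times> real) set" where
  "Op m n e = {(x,y). 0 < y \<and> real_of_int e * y < real_of_int m * x \<and>
       real_of_int m * x + real_of_int (n - e) * y < real_of_int m * real_of_int n}"

definition Cl :: "int \<Rightarrow> int \<Rightarrow> int \<Rightarrow> (real \<times> real) set" where
  "Cl m n e = {(x,y). 0 \<le> y \<and> real_of_int e * y \<le> real_of_int m * x \<and>
       real_of_int m * x + real_of_int (n - e) * y \<le> real_of_int m * real_of_int n}"

lemma tri_sub_Cl:
  assumes "m > 0" "n > 0"
  shows "tri m n e \<subseteq> Cl m n e"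
proof
  fix p assume "p \<in> tri m n e"
  then obtain u v w where uvw: "0 \<le> u" "0 \<le> v" "0 \<le> w" "u + v + w = 1"
    and p: "p = u *\<^sub>R (0,0) + v *\<^sub>R (real_of_int n, 0) + w *\<^sub>R (real_of_int e, real_of_int m)"
    unfolding tri_def convex_hull_3 by blast
  have "p = (v * n + w * e, w * m)" using p by simp
  moreover have "real_of_int e * (w * m) \<le> real_of_int m * (v * n + w * e)"
    using assms uvw by (simp add: algebra_simps)
  moreover have "real_of_int m * (v * n + w * e) + real_of_int (n - e) * (w * m)
      = real_of_int m * real_of_int n * (v + w)" by (simp add: algebra_simps)
  moreover have "real_of_int m * real_of_int n * (v + w) \<le> real_of_int m * real_of_int n"
    using assms uvw by (simp add: mult_left_le)
  ultimately show "p \<in> Cl m n e" unfolding Cl_def using assms uvw by auto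
qed

lemma Op_sub_tri:
  assumes "m > 0" "n > 0"
  shows "Op m n e \<subseteq> tri m n e"
proof
  fix p assume "p \<in> Op m n e"
  then obtain x y where p: "p = (x,y)" and h: "0 < y" "real_of_int e * y < real_of_int m * x"
     "real_of_int m * x + real_of_int (n - e) * y < real_of_int m * real_of_int n"
    unfolding Op_def by blast
  define w where "w = y / m"
  define v where "v = (m * x - e * y) / (m * n)"
  define u where "u = 1 - v - w"
  have mn: "real_of_int m * real_of_int n > 0" using assms by simp
  have "0 \<le> w" unfolding w_def using assms h by simp
  moreover have "0 \<le> v" unfolding v_def using mn h by simp
  moreover have "u = (m * n - (m * x + (n - e) * y)) / (m * n)"
    unfolding u_def v_def w_def using assms by (simp add: field_simps)
  hence "0 \<le> u" using mn h by simp
  moreover have "p = u *\<^sub>R (0,0) + v *\<^sub>R (real_of_int n, 0) + w *\<^sub>R (real_of_int e, real_of_int m)"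
    unfolding p v_def w_def using assms by (simp add: field_simps)
  moreover have "u + v + w = 1" unfolding u_def by simp
  ultimately show "p \<in> tri m n e" unfolding tri_def convex_hull_3 by blast
qed

lemma open_Op: "open (Op m n e)"
proof -
  have "Op m n e = {p. 0 < snd p} \<inter> {p. real_of_int e * snd p < real_of_int m * fst p}
     \<inter> {p. real_of_int m * fst p + real_of_int (n - e) * snd p < real_of_int m * real_of_int n}"
    unfolding Op_def by auto
  also have "open \<dots>"
    by (intro open_Int open_Collect_less continuous_intros)
  finally show ?thesis .
qed

lemma interior_Cl:
  assumes "m > 0"
  shows "interior (Cl m n e) = Op m n e"
proof -
  have "Cl m n e = {p. (0::real, -1::real) \<bullet> p \<le> 0} \<inter> {p. (- real_of_int m, real_of_int e) \<bullet> p \<le> 0}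
     \<inter> {p. (real_of_int m, real_of_int (n - e)) \<bullet> p \<le> real_of_int m * real_of_int n}"
    unfolding Cl_def by (auto simp: inner_prod_def)
  hence "interior (Cl m n e) = {p. (0::real, -1::real) \<bullet> p < 0} \<inter> {p. (- real_of_int m, real_of_int e) \<bullet> p < 0}
     \<inter> {p. (real_of_int m, real_of_int (n - e)) \<bullet> p < real_of_int m * real_of_int n}"
    using assms by (simp add: interior_Int interior_halfspace_le zero_prod_def)
  also have "\<dots> = Op m n e" unfolding Op_def by (auto simp: inner_prod_def)
  finally show ?thesis .
qed

lemma interior_tri:
  assumes "m > 0" "n > 0"
  shows "interior (tri m n e) = Op m n e"
proof
  show "interior (tri m n e) \<subseteq> Op m n e"
    using interior_mono[OF tri_sub_Cl[OF assms]] interior_Cl[OF assms(1)] by simp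
  show "Op m n e \<subseteq> interior (tri m n e)"
    using interior_maximal[OF Op_sub_tri[OF assms] open_Op] .
qed

lemma closed_Cl: "closed (Cl m n e)"
proof -
  have "Cl m n e = {p. 0 \<le> snd p} \<inter> {p. real_of_int e * snd p \<le> real_of_int m * fst p}
     \<inter> {p. real_of_int m * fst p + real_of_int (n - e) * snd p \<le> real_of_int m * real_of_int n}"
    unfolding Cl_def by auto
  also have "closed \<dots>"
    by (intro closed_Int closed_Collect_le continuous_intros)
  finally show ?thesis .
qed

lemma emeasure_lborel_Icc_any: "emeasure lborel {a..b::real} = ennreal (b - a)"
  by (cases "a \<le> b") (auto simp: ennreal_neg)

lemma emeasure_Cl:
  assumes "m > 0" "n > 0"
  shows "emeasure lborel (Cl m n e) = ennreal (real_of_int m * real_of_int n / 2)"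
proof -
  let ?M = "real_of_int m" and ?N = "real_of_int n" and ?E = "real_of_int e"
  have sets: "Cl m n e \<in> sets (lborel \<Otimes>\<^sub>M lborel)"
    unfolding lborel_prod using closed_Cl by (simp add: borel_closed)
  define g where "g = (\<lambda>y::real. indicator {0..?M} y * (?N * (?M - y) / ?M))"
  have slice: "emeasure lborel ((\<lambda>x. (x, y)) -` Cl m n e) = ennreal (g y)" for y
  proof (cases "0 \<le> y")
    case True
    have "(\<lambda>x. (x, y)) -` Cl m n e = {?E * y / ?M .. (?M * ?N - (?N - ?E) * y) / ?M}"
      using True assms by (auto simp: Cl_def field_simps)
    hence "emeasure lborel ((\<lambda>x. (x, y)) -` Cl m n e) = ennreal ((?M * ?N - (?N - ?E) * y) / ?M - ?E * y / ?M)"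
      by (simp add: emeasure_lborel_Icc_any)
    also have "(?M * ?N - (?N - ?E) * y) / ?M - ?E * y / ?M = ?N * (?M - y) / ?M"
      using assms by (simp add: field_simps)
    also have "ennreal (?N * (?M - y) / ?M) = ennreal (g y)"
    proof (cases "y \<le> ?M")
      case True thus ?thesis using \<open>0 \<le> y\<close> by (simp add: g_def)
    next
      case False
      hence "?N * (?M - y) / ?M \<le> 0" using assms by (simp add: divide_nonpos_pos mult_nonneg_nonpos)
      thus ?thesis using False by (simp add: g_def ennreal_neg)
    qed
    finally show ?thesis .
  next
    case False
    hence "(\<lambda>x. (x, y)) -` Cl m n e = {}" by (auto simp: Cl_def)
    thus ?thesis using False by (simp add: g_def)
  qed
  have "emeasure lborel (Cl m n e) = emeasure (lborel \<Otimes>\<^sub>M lborel) (Cl m n e)"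
    by (simp add: lborel_prod)
  also have "\<dots> = (\<integral>\<^sup>+y. emeasure lborel ((\<lambda>x. (x, y)) -` Cl m n e) \<partial>lborel)"
    by (rule lborel_pair.emeasure_pair_measure_alt2[OF sets])
  also have "\<dots> = (\<integral>\<^sup>+y. ennreal (g y) \<partial>lborel)" by (simp add: slice)
  also have "\<dots> = ennreal (?M * ?N / 2)"
  proof -
    have "((\<lambda>y. ?N * (?M - y) / ?M) has_integral
           ((\<lambda>y. ?N * (y - y^2 / (2 * ?M))) ?M - (\<lambda>y. ?N * (y - y^2 / (2 * ?M))) 0)) {0..?M}"
    proof (rule fundamental_theorem_of_calculus)
      show "0 \<le> ?M" using assms by simp
      fix x assume "x \<in> {0..?M}"
      have "((\<lambda>y. ?N * (y - y^2 / (2 * ?M))) has_real_derivative ?N * (1 - 2 * x / (2 * ?M))) (at x within {0..?M})"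
        using assms by (auto intro!: derivative_eq_intros)
      moreover have "?N * (1 - 2 * x / (2 * ?M)) = ?N * (?M - x) / ?M"
        using assms by (simp add: field_simps)
      ultimately show "((\<lambda>y. ?N * (y - y^2 / (2 * ?M))) has_vector_derivative ?N * (?M - x) / ?M) (at x within {0..?M})"
        by (simp add: has_real_derivative_iff_has_vector_derivative)
    qed
    moreover have "(\<lambda>y. ?N * (y - y^2 / (2 * ?M))) ?M - (\<lambda>y. ?N * (y - y^2 / (2 * ?M))) 0 = ?M * ?N / 2"
      using assms by (simp add: field_simps power2_eq_square)
    ultimately have I: "((\<lambda>y. ?N * (?M - y) / ?M) has_integral (?M * ?N / 2)) {0..?M}" by metis
    have geq: "g = (\<lambda>y. if y \<in> {0..?M} then ?N * (?M - y) / ?M else 0)"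
      by (auto simp: g_def indicator_def fun_eq_iff)
    have "(g has_integral (?M * ?N / 2)) UNIV"
      unfolding geq has_integral_restrict_UNIV using I .
    moreover have "g \<in> borel_measurable borel" unfolding g_def by measurable
    moreover have "\<And>y. 0 \<le> g y" unfolding g_def using assms
      by (auto simp: indicator_def)
    ultimately show ?thesis using nn_integral_has_integral_lborel by blast
  qed
  finally show ?thesis .
qed

lemma measure_tri_le:
  assumes "m > 0" "n > 0"
  shows "measure lborel (tri m n e) \<le> real_of_int m * real_of_int n / 2"
proof -
  have "emeasure lborel (tri m n e) \<le> emeasure lborel (Cl m n e)"
    by (rule emeasure_mono[OF tri_sub_Cl[OF assms]]) (simp add: borel_closed closed_Cl)
  also have "\<dots> = ennreal (real_of_int m * real_of_int n / 2)" by (rule emeasure_Cl[OF assms])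
  finally have "emeasure lborel (tri m n e) \<le> ennreal (real_of_int m * real_of_int n / 2)" .
  hence "enn2real (emeasure lborel (tri m n e)) \<le> real_of_int m * real_of_int n / 2"
    by (rule enn2real_leI[rotated]) (use assms in simp)
  thus ?thesis unfolding measure_def .
qed

lemma int_open_eq: "{x::int. a < real_of_int x \<and> real_of_int x < b} = {\<lfloor>a\<rfloor> + 1 .. \<lceil>b\<rceil> - 1}"
proof -
  have "a < real_of_int x \<longleftrightarrow> \<lfloor>a\<rfloor> + 1 \<le> x" for x by linarith
  moreover have "real_of_int x < b \<longleftrightarrow> x \<le> \<lceil>b\<rceil> - 1" for x by linarith
  ultimately show ?thesis by auto
qed

lemma card_int_open_ge:
  "real (card {x::int. a < real_of_int x \<and> real_of_int x < b}) \<ge> b - a - 1"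
proof -
  have "real (card {x::int. a < real_of_int x \<and> real_of_int x < b}) = real (nat (\<lceil>b\<rceil> - 1 - \<lfloor>a\<rfloor>))"
    unfolding int_open_eq by simp
  also have "\<dots> \<ge> b - a - 1" by linarith
  finally show ?thesis .
qed

lemma card_int_open_le:
  assumes "b - a + 1 \<ge> 0"
  shows "real (card {x::int. a < real_of_int x \<and> real_of_int x < b}) \<le> b - a + 1"
proof -
  have "real (card {x::int. a < real_of_int x \<and> real_of_int x < b}) = real (nat (\<lceil>b\<rceil> - 1 - \<lfloor>a\<rfloor>))"
    unfolding int_open_eq by simp
  also have "\<dots> \<le> b - a + 1" using assms by linarith
  finally show ?thesis .
qed

lemma card_int_closed_le:
  assumes "b - a + 1 \<ge> 0"
  shows "real (card {x::int. a \<le> real_of_int x \<and> real_of_int x \<le> b}) \<le> b - a + 1"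
proof -
  have "{x::int. a \<le> real_of_int x \<and> real_of_int x \<le> b} = {\<lceil>a\<rceil> .. \<lfloor>b\<rfloor>}"
    by (auto simp: ceiling_le_iff le_floor_iff)
  hence "real (card {x::int. a \<le> real_of_int x \<and> real_of_int x \<le> b}) = real (nat (\<lfloor>b\<rfloor> + 1 - \<lceil>a\<rceil>))"
    by simp
  also have "\<dots> \<le> b - a + 1" using assms by linarith
  finally show ?thesis .
qed

lemma sum_int_id: "K \<ge> 0 \<Longrightarrow> (\<Sum>y\<in>{1..K}. real_of_int y) = real_of_int K * (real_of_int K + 1) / 2"
proof (induction K rule: int_ge_induct)
  case base thus ?case by simp
next
  case (step i)
  have "{1..i+1} = insert (i+1) {1..i}" using step by auto
  hence "(\<Sum>y\<in>{1..i+1}. real_of_int y) = real_of_int (i+1) + (\<Sum>y\<in>{1..i}. real_of_int y)" by simp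
  thus ?case using step by (simp add: field_simps)
qed

lemma sum_lin: "K \<ge> 0 \<Longrightarrow> (\<Sum>y\<in>{1..K}. (c - d * real_of_int y)) = real_of_int K * c - d * (real_of_int K * (real_of_int K + 1) / 2)"
  by (simp add: sum_subtractf sum_distrib_left[symmetric] sum_int_id)

definition LP :: "int \<Rightarrow> int \<Rightarrow> int \<Rightarrow> (int \<times> int) set" where
  "LP m n e = {(x,y). (real_of_int x, real_of_int y) \<in> Op m n e}"

lemma LP_bounds:
  assumes "m > 0" "n > 0" "0 \<le> e" "e < m" "(x,y) \<in> LP m n e"
  shows "0 < x" "x < n + m" "0 < y" "y < m"
proof -
  have h: "0 < real_of_int y" "real_of_int e * real_of_int y < real_of_int m * real_of_int x"
    "real_of_int m * real_of_int x + real_of_int (n - e) * real_of_int y < real_of_int m * real_of_int n"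
    using assms(5) unfolding LP_def Op_def by auto
  hence hi: "0 < y" "e * y < m * x" "m * x + (n - e) * y < m * n"
    by (simp_all only: of_int_mult[symmetric] of_int_add[symmetric] of_int_less_iff)
  show "0 < y" by (rule hi(1))
  have "0 \<le> e * y" using assms hi by simp
  hence "0 < m * x" using hi by linarith
  thus "0 < x" using assms by (simp add: zero_less_mult_iff)
  have "n * y < m * n" using hi by (simp add: algebra_simps)
  thus "y < m" using assms by (simp add: mult.commute)
  show "x < n + m"
  proof (cases "e \<le> n")
    case True
    hence "0 \<le> (n - e) * y" using hi by simp
    hence "m * x < m * n" using hi by linarith
    thus ?thesis using assms by simp
  next
    case False
    have "(e - n) * y < (e - n) * m" using False \<open>y < m\<close> by simp
    hence "m * x < m * e" using hi by (simp add: algebra_simps)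
    hence "x < e" using assms by simp
    thus ?thesis using assms by simp
  qed
qed

lemma finite_LP:
  assumes "m > 0" "n > 0" "0 \<le> e" "e < m"
  shows "finite (LP m n e)"
proof -
  have "LP m n e \<subseteq> {0..n+m} \<times> {0..m}"
    using LP_bounds[OF assms] by fastforce
  thus ?thesis by (rule finite_subset) simp
qed

definition Xrow :: "int \<Rightarrow> int \<Rightarrow> int \<Rightarrow> int \<Rightarrow> int set" where
  "Xrow m n e y = {x. (real_of_int x, real_of_int y) \<in> Op m n e}"

lemma LP_Sigma:
  assumes "m > 0" "n > 0" "0 \<le> e" "e < m"
  shows "LP m n e = (\<lambda>(y,x). (x,y)) ` (SIGMA y:{1..m-1}. Xrow m n e y)"
proof -
  have "(x,y) \<in> LP m n e \<longleftrightarrow> y \<in> {1..m-1} \<and> x \<in> Xrow m n e y" for x y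
    using LP_bounds[OF assms, of x y] by (auto simp: LP_def Xrow_def)
  thus ?thesis by (auto simp: image_iff)
qed

lemma Xrow_eq:
  assumes "m > 0"
  shows "Xrow m n e y = {x::int. real_of_int e * real_of_int y / real_of_int m < real_of_int x \<and>
      real_of_int x < (real_of_int m * real_of_int n - real_of_int (n - e) * real_of_int y) / real_of_int m}
      \<inter> {x. 0 < y}"
  using assms by (auto simp: Xrow_def Op_def field_simps)

lemma card_LP:
  assumes "m > 0" "n > 0" "0 \<le> e" "e < m"
  shows "real (card (LP m n e)) = (\<Sum>y\<in>{1..m-1}. real (card (Xrow m n e y)))"
proof -
  have "inj_on (\<lambda>(y,x). (x::int,y::int)) A" for A by (auto simp: inj_on_def)
  hence "card (LP m n e) = card (SIGMA y:{1..m-1}. Xrow m n e y)"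
    unfolding LP_Sigma[OF assms] by (simp add: card_image)
  also have "\<dots> = (\<Sum>y\<in>{1..m-1}. card (Xrow m n e y))"
  proof (rule card_SigmaI)
    show "finite {1..m-1}" by simp
    show "\<forall>y\<in>{1..m-1}. finite (Xrow m n e y)"
    proof
      fix y assume "y \<in> {1..m-1}"
      have "Xrow m n e y \<subseteq> fst ` LP m n e" by (force simp: Xrow_def LP_def image_iff)
      thus "finite (Xrow m n e y)" using finite_LP[OF assms] by (metis finite_imageI finite_subset)
    qed
  qed
  finally show ?thesis by simp
qed

lemma card_Xrow_ge:
  assumes "m > 0" "y > 0"
  shows "real (card (Xrow m n e y)) \<ge> real_of_int n * (real_of_int m - real_of_int y) / real_of_int m - 1"
proof -
  have "real (card (Xrow m n e y)) \<ge> (real_of_int m * real_of_int n - real_of_int (n - e) * real_of_int y) / real_of_int m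
        - real_of_int e * real_of_int y / real_of_int m - 1"
    unfolding Xrow_eq[OF assms(1)] using assms(2) by (simp add: card_int_open_ge)
  moreover have "(real_of_int m * real_of_int n - real_of_int (n - e) * real_of_int y) / real_of_int m
        - real_of_int e * real_of_int y / real_of_int m = real_of_int n * (real_of_int m - real_of_int y) / real_of_int m"
    using assms by (simp add: field_simps)
  ultimately show ?thesis by simp
qed

lemma card_LP_ge:
  assumes "m > 0" "n > 0" "0 \<le> e" "e < m"
  shows "real (card (LP m n e)) \<ge> (real_of_int m - 1) * (real_of_int n / 2 - 1)"
proof -
  have "real (card (LP m n e)) \<ge> (\<Sum>y\<in>{1..m-1}. (real_of_int n - 1) - (real_of_int n / real_of_int m) * real_of_int y)"
    unfolding card_LP[OF assms]
  proof (rule sum_mono)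
    fix y assume "y \<in> {1..m-1}"
    hence "real (card (Xrow m n e y)) \<ge> real_of_int n * (real_of_int m - real_of_int y) / real_of_int m - 1"
      using assms by (intro card_Xrow_ge) auto
    moreover have "real_of_int n * (real_of_int m - real_of_int y) / real_of_int m - 1 =
       (real_of_int n - 1) - (real_of_int n / real_of_int m) * real_of_int y"
      using assms by (simp add: field_simps)
    ultimately show "(real_of_int n - 1) - (real_of_int n / real_of_int m) * real_of_int y \<le> real (card (Xrow m n e y))"
      by simp
  qed
  also have "(\<Sum>y\<in>{1..m-1}. (real_of_int n - 1) - (real_of_int n / real_of_int m) * real_of_int y)
     = (real_of_int m - 1) * (real_of_int n / 2 - 1)"
    using assms by (subst sum_lin) (auto simp: field_simps)
  finally show ?thesis .
qed

definition Dn :: "nat \<Rightarrow> nat set" where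
  "Dn N = {d. 2 \<le> d \<and> d \<le> N \<and> (d = 2 \<or> d = 3 \<or> d = 5 \<or> coprime d 30)}"

definition S1 :: "nat \<Rightarrow> real" where "S1 N = (\<Sum>d\<in>Dn N. 1 / real d)"
definition S2 :: "nat \<Rightarrow> real" where "S2 N = (\<Sum>d\<in>Dn N. 1 / (real d)^2)"

lemma finite_Dn: "finite (Dn N)" unfolding Dn_def by (rule finite_subset[of _ "{..N}"]) auto

lemma prime_in_Dn:
  assumes "prime p" "p \<le> N"
  shows "p \<in> Dn N"
proof -
  have p2: "2 \<le> p" using prime_ge_2_nat[OF assms(1)] .
  have "p = 2 \<or> p = 3 \<or> p = 5 \<or> coprime p 30"
  proof (cases "p dvd 30")
    case True
    have "(30::nat) = 2 * (3 * 5)" by simp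
    hence "p dvd 2 * (3 * 5)" using True by metis
    hence "p dvd 2 \<or> p dvd (3 * 5)" by (rule prime_dvd_multD[OF assms(1)])
    moreover have "p dvd (3 * 5) \<Longrightarrow> p dvd 3 \<or> p dvd 5" by (rule prime_dvd_multD[OF assms(1)])
    ultimately have "p dvd 2 \<or> p dvd 3 \<or> p dvd 5" by blast
    hence "p \<le> 5" by (auto dest: dvd_imp_le)
    hence "p = 2 \<or> p = 3 \<or> p = 4 \<or> p = 5" using p2 by auto
    moreover have "p dvd 2 \<Longrightarrow> p = 2" using p2 by (auto dest: dvd_imp_le)
    moreover have "p = 3" if h: "p dvd 3"
    proof -
      have "p \<le> 3" using h by (auto dest: dvd_imp_le)
      hence "p = 2 \<or> p = 3" using p2 by auto
      thus "p = 3" using h by auto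
    qed
    moreover have "p = 5" if h: "p dvd 5"
    proof -
      have "p \<le> 5" using h by (auto dest: dvd_imp_le)
      hence "p = 2 \<or> p = 3 \<or> p = 4 \<or> p = 5" using p2 by auto
      thus "p = 5" using h by auto
    qed
    ultimately show ?thesis using \<open>p dvd 2 \<or> p dvd 3 \<or> p dvd 5\<close> by auto
  next
    case False thus ?thesis using assms(1) by (simp add: prime_imp_coprime)
  qed
  thus ?thesis using p2 assms(2) unfolding Dn_def by auto
qed

lemma gcd_ne1_prime:
  fixes x y :: int
  assumes "y \<noteq> 0" "gcd x y \<noteq> 1"
  obtains p where "prime p" "int p dvd x" "int p dvd y"
proof -
  have "gcd x y \<ge> 0" by simp
  hence "nat (gcd x y) \<noteq> 1" using assms by (simp add: nat_eq_iff)
  then obtain p where p: "prime p" "p dvd nat (gcd x y)" using prime_factor_nat by blast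
  hence "int p dvd int (nat (gcd x y))" by (simp only: int_dvd_int_iff)
  hence "int p dvd gcd x y" using \<open>gcd x y \<ge> 0\<close> by simp
  thus ?thesis using that p(1) by (meson dvd_trans gcd_dvd1 gcd_dvd2)
qed

definition Md :: "int \<Rightarrow> int \<Rightarrow> int \<Rightarrow> int \<Rightarrow> (int \<times> int) set" where
  "Md m n e d = {(x,y) \<in> LP m n e. d dvd x \<and> d dvd y}"

lemma arith_caseA:
  fixes n m d K :: real
  assumes "n > 0" "m > 0" "d > 0" "K \<ge> 0"
  shows "K * (n / d + 1) - n / m * (K * (K + 1) / 2) \<le> n * m / (2 * d^2) + K"
proof -
  have eq: "n * m / (2 * d^2) + K - (K * (n / d + 1) - n / m * (K * (K + 1) / 2)) =
        n * ((m - d * K)^2 + d^2 * K) / (2 * m * d^2)"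
    using assms by (simp add: field_simps power2_eq_square)
  have "n * ((m - d * K)^2 + d^2 * K) / (2 * m * d^2) \<ge> 0"
    using assms by (intro divide_nonneg_pos mult_nonneg_nonneg add_nonneg_nonneg) auto
  thus ?thesis using eq by linarith
qed

lemma card_Md:
  assumes "m > 0" "n > 0" "0 \<le> e" "e < m" "d > 0"
  shows "real (card (Md m n e d)) \<le> real_of_int n * real_of_int m / (2 * (real_of_int d)^2) + (real_of_int m - 1) / real_of_int d"
proof -
  define K where "K = (m - 1) div d"
  define J where "J = (\<lambda>k. {j::int. (real_of_int (d * j), real_of_int (d * k)) \<in> Op m n e})"
  have K0: "K \<ge> 0" unfolding K_def using assms by (simp add: pos_imp_zdiv_nonneg_iff)
  have dK: "d * K \<le> m - 1"
  proof -
    have "d * ((m - 1) div d) + (m - 1) mod d = m - 1" by (rule mult_div_mod_eq)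
    moreover have "(m - 1) mod d \<ge> 0" using assms(5) by simp
    ultimately show "d * K \<le> m - 1" unfolding K_def by linarith
  qed
  have Kle: "real_of_int K \<le> (real_of_int m - 1) / real_of_int d"
  proof -
    have "real_of_int d * real_of_int K \<le> real_of_int m - 1" using dK by (metis of_int_diff of_int_le_iff of_int_mult of_int_1)
    thus ?thesis using assms(5) by (simp add: field_simps)
  qed
  have sub: "Md m n e d \<subseteq> (\<lambda>(k,j). (d * j, d * k)) ` (SIGMA k:{1..K}. J k)"
  proof
    fix p assume "p \<in> Md m n e d"
    then obtain x y where p: "p = (x,y)" "(x,y) \<in> LP m n e" "d dvd x" "d dvd y" unfolding Md_def by auto
    obtain j k where jk: "x = d * j" "y = d * k" using p by (meson dvdE)
    have "0 < y" "y < m" using LP_bounds[OF assms(1-4) p(2)] by auto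
    hence k1: "1 \<le> k" "d * k \<le> m - 1" using jk assms(5) by (auto simp: zero_less_mult_iff)
    have "(d * k) div d \<le> (m - 1) div d" using k1(2) assms(5) by (rule zdiv_mono1)
    hence "k \<le> K" unfolding K_def using assms(5) by simp
    moreover have "j \<in> J k" using p(2) jk unfolding J_def LP_def by simp
    ultimately show "p \<in> (\<lambda>(k,j). (d * j, d * k)) ` (SIGMA k:{1..K}. J k)"
      using k1 p(1) jk by (force simp: image_iff)
  qed
  have Jk: "real (card (J k)) \<le> real_of_int n / real_of_int d + 1 - real_of_int n / real_of_int m * real_of_int k"
    if k: "k \<in> {1..K}" for k
  proof -
    have dk: "real_of_int d * real_of_int k \<le> real_of_int m - 1"
    proof -
      have "d * k \<le> d * K" using k assms(5) by simp
      hence "d * k \<le> m - 1" using dK by simp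
      thus ?thesis by (metis of_int_diff of_int_le_iff of_int_mult of_int_1)
    qed
    define a where "a = real_of_int e * (real_of_int d * real_of_int k) / (real_of_int m * real_of_int d)"
    define b where "b = (real_of_int m * real_of_int n - real_of_int (n - e) * (real_of_int d * real_of_int k)) / (real_of_int m * real_of_int d)"
    have Jeq: "J k = {j::int. a < real_of_int j \<and> real_of_int j < b}"
      unfolding a_def b_def using assms k by (auto simp: J_def Op_def field_simps)
    have ba: "b - a = real_of_int n / real_of_int d - real_of_int n / real_of_int m * real_of_int k"
      unfolding a_def b_def using assms by (simp add: field_simps)
    have "real_of_int n / real_of_int d - real_of_int n / real_of_int m * real_of_int k \<ge> 0"
    proof -
      have "real_of_int n / real_of_int m * real_of_int k = real_of_int n * (real_of_int d * real_of_int k) / (real_of_int m * real_of_int d)"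
        using assms by (simp add: field_simps)
      also have "\<dots> \<le> real_of_int n * real_of_int m / (real_of_int m * real_of_int d)"
        using assms dk by (intro divide_right_mono mult_left_mono) auto
      also have "\<dots> = real_of_int n / real_of_int d" using assms by simp
      finally show ?thesis by simp
    qed
    hence "real (card (J k)) \<le> b - a + 1" unfolding Jeq using ba by (intro card_int_open_le) linarith
    thus ?thesis using ba by linarith
  qed
  have finJ: "finite (J k)" for k
  proof -
    have "J k \<subseteq> {j. real_of_int e * (real_of_int d * real_of_int k) / (real_of_int m * real_of_int d) < real_of_int j \<and>
       real_of_int j < (real_of_int m * real_of_int n - real_of_int (n - e) * (real_of_int d * real_of_int k)) / (real_of_int m * real_of_int d)}"
      using assms by (auto simp: J_def Op_def field_simps)
    thus ?thesis unfolding int_open_eq by (rule finite_subset) simp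
  qed
  have "card (Md m n e d) \<le> card ((\<lambda>(k,j). (d * j, d * k)) ` (SIGMA k:{1..K}. J k))"
    by (rule card_mono[OF _ sub]) (simp add: finJ)
  also have "\<dots> \<le> card (SIGMA k:{1..K}. J k)" by (rule card_image_le) (simp add: finJ)
  also have "\<dots> = (\<Sum>k\<in>{1..K}. card (J k))" by (rule card_SigmaI) (auto simp: finJ)
  finally have "real (card (Md m n e d)) \<le> (\<Sum>k\<in>{1..K}. real (card (J k)))" by (metis of_nat_le_iff of_nat_sum)
  also have "\<dots> \<le> (\<Sum>k\<in>{1..K}. (real_of_int n / real_of_int d + 1) - real_of_int n / real_of_int m * real_of_int k)"
    by (rule sum_mono) (erule Jk)
  also have "\<dots> = real_of_int K * (real_of_int n / real_of_int d + 1) - real_of_int n / real_of_int m * (real_of_int K * (real_of_int K + 1) / 2)"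
    using K0 by (rule sum_lin)
  also have "\<dots> \<le> real_of_int n * real_of_int m / (2 * (real_of_int d)^2) + real_of_int K"
    using assms K0 by (intro arith_caseA) auto
  also have "\<dots> \<le> real_of_int n * real_of_int m / (2 * (real_of_int d)^2) + (real_of_int m - 1) / real_of_int d"
    using Kle by simp
  finally show ?thesis .
qed

definition Pnon :: "int \<Rightarrow> int \<Rightarrow> int \<Rightarrow> (int \<times> int) set" where
  "Pnon m n e = {p \<in> LP m n e. gcd (fst p) (snd p) \<noteq> 1}"

lemma Nprim_eq:
  assumes "m > 0" "n > 0" "0 \<le> e" "e < m"
  shows "real (Nprim m n e) = real (card (LP m n e)) - real (card (Pnon m n e))"
proof -
  have eq: "{(x :: int, y :: int). gcd x y = 1 \<and> (real_of_int x, real_of_int y) \<in> interior (tri m n e)}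
        = LP m n e - Pnon m n e"
    unfolding interior_tri[OF assms(1,2)] LP_def Pnon_def by auto
  have "card (LP m n e - Pnon m n e) = card (LP m n e) - card (Pnon m n e)"
    by (rule card_Diff_subset) (auto simp: Pnon_def intro: finite_subset[OF _ finite_LP[OF assms]])
  moreover have "card (Pnon m n e) \<le> card (LP m n e)"
    by (rule card_mono[OF finite_LP[OF assms]]) (auto simp: Pnon_def)
  ultimately show ?thesis unfolding Nprim_def eq by simp
qed

lemma caseA_nonprim:
  assumes "m > 0" "n > 0" "0 \<le> e" "e < m"
  shows "real (card (Pnon m n e)) \<le> real_of_int n * real_of_int m / 2 * S2 (nat (m - 1))
            + (real_of_int m - 1) * S1 (nat (m - 1))"
proof -
  have sub: "Pnon m n e \<subseteq> (\<Union>d\<in>Dn (nat (m - 1)). Md m n e (int d))"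
  proof
    fix p assume "p \<in> Pnon m n e"
    then obtain x y where p: "p = (x,y)" "(x,y) \<in> LP m n e" "gcd x y \<noteq> 1" unfolding Pnon_def by (cases p) auto
    have y: "0 < y" "y < m" using LP_bounds[OF assms p(2)] by auto
    obtain q where q: "prime q" "int q dvd x" "int q dvd y" using gcd_ne1_prime[of y x] y p(3) by auto
    have "int q \<le> y" using q(3) y(1) by (rule zdvd_imp_le)
    hence "q \<le> nat (m - 1)" using y by linarith
    hence "q \<in> Dn (nat (m - 1))" using q(1) by (intro prime_in_Dn)
    moreover have "p \<in> Md m n e (int q)" using p q unfolding Md_def by auto
    ultimately show "p \<in> (\<Union>d\<in>Dn (nat (m - 1)). Md m n e (int d))" by blast
  qed
  have finMd: "finite (Md m n e d)" for d
    by (rule finite_subset[OF _ finite_LP[OF assms]]) (auto simp: Md_def)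
  have "card (Pnon m n e) \<le> card (\<Union>d\<in>Dn (nat (m - 1)). Md m n e (int d))"
    by (rule card_mono[OF _ sub]) (simp add: finite_Dn finMd)
  also have "\<dots> \<le> (\<Sum>d\<in>Dn (nat (m - 1)). card (Md m n e (int d)))"
    by (rule card_UN_le[OF finite_Dn])
  finally have "real (card (Pnon m n e)) \<le> (\<Sum>d\<in>Dn (nat (m - 1)). real (card (Md m n e (int d))))"
    by (metis of_nat_le_iff of_nat_sum)
  also have "\<dots> \<le> (\<Sum>d\<in>Dn (nat (m - 1)). real_of_int n * real_of_int m / 2 * (1 / (real d)^2)
            + (real_of_int m - 1) * (1 / real d))"
  proof (rule sum_mono)
    fix d assume "d \<in> Dn (nat (m - 1))"
    hence "int d > 0" unfolding Dn_def by auto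
    from card_Md[OF assms this]
    show "real (card (Md m n e (int d))) \<le> real_of_int n * real_of_int m / 2 * (1 / (real d)^2)
            + (real_of_int m - 1) * (1 / real d)" by simp
  qed
  also have "\<dots> = real_of_int n * real_of_int m / 2 * S2 (nat (m - 1)) + (real_of_int m - 1) * S1 (nat (m - 1))"
    unfolding S1_def S2_def by (simp add: sum.distrib sum_distrib_left)
  finally show ?thesis .
qed

definition len :: "real set \<Rightarrow> real" where
  "len S = (if S = {} then 0 else Sup S - Inf S)"

lemma len_bounds:
  assumes "S \<noteq> {}" "bdd_above S" "bdd_below S" "y \<in> S"
  shows "Inf S \<le> y" "y \<le> Sup (S::real set)"
  using cInf_lower[OF assms(4) assms(3)] cSup_upper[OF assms(4) assms(2)] by auto

lemma len_nonneg:
  fixes S :: "real set"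
  assumes "bdd_above S" "bdd_below S"
  shows "len S \<ge> 0"
proof (cases "S = {}")
  case False
  then obtain y where "y \<in> S" by auto
  hence "Inf S \<le> y" "y \<le> Sup S" using len_bounds[OF False assms] by auto
  thus ?thesis using False unfolding len_def by simp
qed (simp add: len_def)

lemma len_inner:
  fixes S :: "real set"
  assumes "S \<noteq> {}" "bdd_above S" "bdd_below S"
    and conv: "\<And>a b y. a \<in> S \<Longrightarrow> b \<in> S \<Longrightarrow> a \<le> y \<Longrightarrow> y \<le> b \<Longrightarrow> y \<in> S"
    and "Inf S < y" "y < Sup S"
  shows "y \<in> S"
proof -
  obtain a where a: "a \<in> S" "a < y" using assms(5) cInf_less_iff[OF assms(1,3)] by auto
  obtain b where b: "b \<in> S" "y < b" using assms(6) less_cSup_iff[OF assms(1,2)] by auto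
  show ?thesis using conv[OF a(1) b(1)] a b by simp
qed

lemma len_le:
  fixes S :: "real set"
  assumes "bdd_above S" "bdd_below S" "B \<ge> 0"
    and "\<And>y1 y2. y1 \<in> S \<Longrightarrow> y2 \<in> S \<Longrightarrow> y2 - y1 \<le> B"
  shows "len S \<le> B"
proof (cases "S = {}")
  case False
  have "y2 - B \<le> Inf S" if "y2 \<in> S" for y2
    by (rule cInf_greatest[OF False]) (use assms(4) that in force)
  hence "y2 \<le> Inf S + B" if "y2 \<in> S" for y2 using that by fastforce
  hence "Sup S \<le> Inf S + B" by (intro cSup_least[OF False]) auto
  thus ?thesis using False unfolding len_def by simp
qed (use assms in \<open>simp add: len_def\<close>)

lemma mult_Sup_le:
  assumes "c \<ge> 0" "S \<noteq> {}" "bdd_above S" "\<And>y. y \<in> S \<Longrightarrow> c * y \<le> B"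
  shows "c * Sup (S::real set) \<le> B"
proof (cases "c = 0")
  case True
  obtain y where "y \<in> S" using assms(2) by auto
  thus ?thesis using assms(4) True by force
next
  case False
  hence c: "c > 0" using assms(1) by simp
  have "y \<le> B / c" if "y \<in> S" for y using assms(4)[OF that] c by (simp add: field_simps)
  hence "Sup S \<le> B / c" by (intro cSup_least[OF assms(2)]) auto
  thus ?thesis using c by (simp add: field_simps)
qed

lemma mult_Inf_ge:
  assumes "c \<ge> 0" "S \<noteq> {}" "bdd_below S" "\<And>y. y \<in> S \<Longrightarrow> B \<le> c * y"
  shows "B \<le> c * Inf (S::real set)"
proof (cases "c = 0")
  case True
  obtain y where "y \<in> S" using assms(2) by auto
  thus ?thesis using assms(4) True by force
next
  case False
  hence c: "c > 0" using assms(1) by simp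
  have "B / c \<le> y" if "y \<in> S" for y using assms(4)[OF that] c by (simp add: field_simps)
  hence "B / c \<le> Inf S" by (intro cInf_greatest[OF assms(2)]) auto
  thus ?thesis using c by (simp add: field_simps)
qed

lemma len_mix:
  fixes S1 S2 S3 :: "real set"
  assumes "S1 \<noteq> {}" "S3 \<noteq> {}" "bdd_above S1" "bdd_below S1" "bdd_above S3" "bdd_below S3"
    "bdd_above S2" "bdd_below S2" "0 \<le> t" "t \<le> 1"
    and mix: "\<And>y1 y3. y1 \<in> S1 \<Longrightarrow> y3 \<in> S3 \<Longrightarrow> t * y1 + (1 - t) * y3 \<in> S2"
  shows "len S2 \<ge> t * len S1 + (1 - t) * len S3"
proof -
  obtain a1 where a1: "a1 \<in> S1" using assms(1) by auto
  obtain a3 where a3: "a3 \<in> S3" using assms(2) by auto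
  have S2ne: "S2 \<noteq> {}" using mix[OF a1 a3] by auto
  have sup1: "t * Sup S1 \<le> Sup S2 - (1 - t) * y3" if "y3 \<in> S3" for y3
    by (rule mult_Sup_le[OF assms(9) assms(1) assms(3)])
       (use mix that len_bounds[OF S2ne assms(7,8)] in force)
  have sup2: "(1 - t) * Sup S3 \<le> Sup S2 - t * Sup S1"
  proof (rule mult_Sup_le[OF _ assms(2) assms(5)])
    show "0 \<le> 1 - t" using assms(10) by simp
    fix y assume "y \<in> S3"
    from sup1[OF this] show "(1 - t) * y \<le> Sup S2 - t * Sup S1" by linarith
  qed
  have inf1: "Inf S2 - (1 - t) * y3 \<le> t * Inf S1" if "y3 \<in> S3" for y3
    by (rule mult_Inf_ge[OF assms(9) assms(1) assms(4)])
       (use mix that len_bounds[OF S2ne assms(7,8)] in force)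
  have inf2: "Inf S2 - t * Inf S1 \<le> (1 - t) * Inf S3"
  proof (rule mult_Inf_ge[OF _ assms(2) assms(6)])
    show "0 \<le> 1 - t" using assms(10) by simp
    fix y assume "y \<in> S3"
    from inf1[OF this] show "Inf S2 - t * Inf S1 \<le> (1 - t) * y" by linarith
  qed
  show ?thesis using sup2 inf2 assms(1,2) S2ne unfolding len_def by (simp add: algebra_simps)
qed

lemma sampling:
  fixes f :: "int \<Rightarrow> real" and lo hi d :: int and Mx :: real
  assumes d: "d \<ge> 1"
    and nonneg: "\<And>j. lo \<le> j \<Longrightarrow> j \<le> hi \<Longrightarrow> f j \<ge> 0"
    and Mx: "\<And>j. lo \<le> j \<Longrightarrow> j \<le> hi \<Longrightarrow> f j \<le> Mx" and Mx0: "Mx \<ge> 0"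
    and qc: "\<And>i j k. lo \<le> i \<Longrightarrow> i < j \<Longrightarrow> j < k \<Longrightarrow> k \<le> hi \<Longrightarrow> min (f i) (f k) \<le> f j"
  shows "(\<Sum>k\<in>{k. lo \<le> d * k \<and> d * k \<le> hi}. f (d * k)) \<le> (\<Sum>j\<in>{lo..hi}. f j) / real_of_int d + Mx"
proof -
  define K where "K = {k. lo \<le> d * k \<and> d * k \<le> hi}"
  have dpos: "real_of_int d > 0" using d by simp
  have step: "d * k1 + d \<le> d * k2" if "k1 < k2" for k1 k2
  proof -
    have "d * (k1 + 1) \<le> d * k2" using that d by (intro mult_left_mono) auto
    thus ?thesis by (simp add: algebra_simps)
  qed
  have Ksub: "K \<subseteq> {min lo 0 .. max hi 0}"
  proof
    fix k assume "k \<in> K"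
    hence k: "lo \<le> d * k" "d * k \<le> hi" unfolding K_def by auto
    show "k \<in> {min lo 0 .. max hi 0}"
    proof (cases "k \<ge> 0")
      case True
      hence "1 * k \<le> d * k" using d by (intro mult_right_mono) auto
      hence "k \<le> d * k" by simp
      hence "k \<le> hi" using k by linarith
      thus ?thesis using True by simp
    next
      case False
      hence "d * k \<le> 1 * k" using d by (intro mult_right_mono_neg) auto
      hence "d * k \<le> k" by simp
      hence "lo \<le> k" using k by linarith
      thus ?thesis using False by simp
    qed
  qed
  have finK: "finite K" using Ksub finite_subset by blast
  have sum_nonneg: "(\<Sum>j\<in>{lo..hi}. f j) \<ge> 0" by (rule sum_nonneg) (use nonneg in auto)
  show ?thesis
  proof (cases "K = {}")
    case True
    hence "{k. lo \<le> d * k \<and> d * k \<le> hi} = {}" unfolding K_def .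
    hence "(\<Sum>k\<in>{k. lo \<le> d * k \<and> d * k \<le> hi}. f (d * k)) = 0" by (simp only: sum.empty)
    moreover have "(\<Sum>j\<in>{lo..hi}. f j) / real_of_int d \<ge> 0" using sum_nonneg dpos by simp
    ultimately show ?thesis using Mx0 by linarith
  next
    case False
    define V where "V = Max ((\<lambda>k. f (d * k)) ` K)"
    have "V \<in> (\<lambda>k. f (d * k)) ` K" unfolding V_def using finK False by (intro Max_in) auto
    then obtain ks where ks: "ks \<in> K" "f (d * ks) = V" by auto
    have ksmax: "f (d * k) \<le> f (d * ks)" if "k \<in> K" for k
      using ks(2) finK that unfolding V_def by (auto intro: Max_ge)
    have ksb: "lo \<le> d * ks" "d * ks \<le> hi" using ks(1) unfolding K_def by auto
    define B where "B = (\<lambda>k. if k < ks then {d * k .. d * k + d - 1} else {d * k - d + 1 .. d * k})"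
    have Bsub: "B k \<subseteq> {lo..hi}" if "k \<in> K - {ks}" for k
    proof -
      have kb: "lo \<le> d * k" "d * k \<le> hi" "k \<noteq> ks" using that unfolding K_def by auto
      show ?thesis
      proof (cases "k < ks")
        case True thus ?thesis using step[OF True] kb ksb unfolding B_def by auto
      next
        case False
        hence "ks < k" using kb by simp
        thus ?thesis using step[of ks k] kb ksb False unfolding B_def by auto
      qed
    qed
    have Bge: "f (d * k) \<le> f j" if "k \<in> K - {ks}" "j \<in> B k" for k j
    proof -
      have kb: "lo \<le> d * k" "d * k \<le> hi" "k \<noteq> ks" using that(1) unfolding K_def by auto
      have fk: "f (d * k) \<le> f (d * ks)" using ksmax that(1) by auto
      show ?thesis
      proof (cases "j = d * k")
        case True thus ?thesis by simp
      next
        case jne: False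
        show ?thesis
        proof (cases "k < ks")
          case True
          have j: "d * k < j" "j < d * ks" using that(2) True jne step[OF True] unfolding B_def by auto
          have "min (f (d * k)) (f (d * ks)) \<le> f j" by (rule qc) (use kb ksb j in auto)
          thus ?thesis using fk by simp
        next
          case False
          hence kk: "ks < k" using kb by simp
          have j: "d * ks < j" "j < d * k" using that(2) False jne step[OF kk] unfolding B_def by auto
          have "min (f (d * ks)) (f (d * k)) \<le> f j" by (rule qc) (use kb ksb j in auto)
          thus ?thesis using fk by simp
        qed
      qed
    qed
    have Bcard: "card (B k) = nat d" for k unfolding B_def by auto
    have Bdisj: "B k1 \<inter> B k2 = {}" if "k1 \<in> K - {ks}" "k2 \<in> K - {ks}" "k1 \<noteq> k2" for k1 k2
    proof -
      have lt: "\<forall>x\<in>B a. \<forall>y\<in>B b. x < y" if ab: "a < b" "a \<noteq> ks" "b \<noteq> ks" for a b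
      proof (intro ballI)
        fix x y assume x: "x \<in> B a" and y: "y \<in> B b"
        consider "a < ks" "b < ks" | "a < ks" "ks < b" | "ks < a" "ks < b"
          using ab by linarith
        thus "x < y"
        proof cases
          case 1 thus ?thesis using x y step[OF ab(1)] unfolding B_def by auto
        next
          case 2 thus ?thesis using x y step[OF 2(1)] step[OF 2(2)] unfolding B_def by auto
        next
          case 3 thus ?thesis using x y step[OF ab(1)] unfolding B_def by auto
        qed
      qed
      show ?thesis
      proof (cases "k1 < k2")
        case True thus ?thesis using lt[of k1 k2] that by fastforce
      next
        case False
        hence "k2 < k1" using that by simp
        thus ?thesis using lt[of k2 k1] that by fastforce
      qed
    qed
    have "real_of_int d * (\<Sum>k\<in>K - {ks}. f (d * k)) = (\<Sum>k\<in>K - {ks}. \<Sum>j\<in>B k. f (d * k))"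
    proof -
      have "real (nat d) = real_of_int d" using d by simp
      thus ?thesis by (simp add: sum_distrib_left Bcard)
    qed
    also have "\<dots> \<le> (\<Sum>k\<in>K - {ks}. \<Sum>j\<in>B k. f j)"
      by (intro sum_mono) (use Bge in auto)
    also have "\<dots> = (\<Sum>j\<in>(\<Union>k\<in>K - {ks}. B k). f j)"
      by (rule sum.UNION_disjoint[symmetric]) (use finK Bdisj in \<open>auto simp: B_def\<close>)
    also have "\<dots> \<le> (\<Sum>j\<in>{lo..hi}. f j)"
      by (rule sum_mono2) (use Bsub nonneg in auto)
    finally have main: "(\<Sum>k\<in>K - {ks}. f (d * k)) \<le> (\<Sum>j\<in>{lo..hi}. f j) / real_of_int d"
      using dpos by (simp add: field_simps)
    have "(\<Sum>k\<in>K. f (d * k)) = f (d * ks) + (\<Sum>k\<in>K - {ks}. f (d * k))"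
      by (rule sum.remove[OF finK ks(1)])
    also have "\<dots> \<le> Mx + (\<Sum>j\<in>{lo..hi}. f j) / real_of_int d"
      using main Mx[OF ksb] by simp
    finally show ?thesis unfolding K_def by simp
  qed
qed

lemma Op_y_bounds:
  assumes "m > 0" "n > 0" "(x,y) \<in> Op m n e"
  shows "0 < y" "y < real_of_int m"
proof -
  have h: "0 < y" "real_of_int e * y < real_of_int m * x"
    "real_of_int m * x + real_of_int (n - e) * y < real_of_int m * real_of_int n"
    using assms(3) unfolding Op_def by auto
  show "0 < y" by (rule h(1))
  have "real_of_int n * y < real_of_int m * real_of_int n" using h by (simp add: algebra_simps)
  thus "y < real_of_int m" using assms by (simp add: mult.commute)
qed

lemma mix_strict:
  fixes A1 B1 A3 B3 t :: real
  assumes "A1 < B1" "A3 < B3" "0 \<le> t" "t \<le> 1"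
  shows "t * A1 + (1 - t) * A3 < t * B1 + (1 - t) * B3"
proof (cases "t = 0")
  case True thus ?thesis using assms by simp
next
  case False
  hence "t * A1 < t * B1" using assms by simp
  moreover have "(1 - t) * A3 \<le> (1 - t) * B3" using assms by (intro mult_left_mono) auto
  ultimately show ?thesis by simp
qed

lemma lin_between:
  fixes c a b y :: real
  assumes "a \<le> y" "y \<le> b"
  shows "c * y \<le> max (c * a) (c * b)"
proof (cases "c \<ge> 0")
  case True thus ?thesis using assms mult_left_mono[OF assms(2) True] by simp
next
  case False thus ?thesis using assms mult_left_mono_neg[OF assms(1)] by simp
qed

definition crow :: "int \<Rightarrow> int \<Rightarrow> int \<Rightarrow> int \<Rightarrow> int \<Rightarrow> real \<Rightarrow> real set" where
  "crow m n e q r j = {y. ((j + real_of_int r * y) / real_of_int q, y) \<in> Op m n e}"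

definition ext :: "int \<Rightarrow> int \<Rightarrow> int \<Rightarrow> int \<Rightarrow> int \<Rightarrow> real \<Rightarrow> real" where
  "ext m n e q r j = len (crow m n e q r j)"

context
  fixes m n e q r :: int
  assumes m: "m > 0" and n: "n > 0" and e0: "0 \<le> e" and em: "e < m" and q: "q \<ge> 1" and cop: "coprime q r"
begin

abbreviation "dl \<equiv> q * e - r * m"
abbreviation "cmin \<equiv> min 0 (min (n * q) dl)"
abbreviation "cmax \<equiv> max 0 (max (n * q) dl)"
abbreviation "W \<equiv> cmax - cmin"

lemma crow_iff:
  "y \<in> crow m n e q r j \<longleftrightarrow> 0 < y \<and> real_of_int dl * y < real_of_int m * j \<and>
      real_of_int (n * q - dl) * y < real_of_int m * (real_of_int (n * q) - j)"
proof -
  have qp: "real_of_int q > 0" using q by simp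
  have "real_of_int e * y < real_of_int m * ((j + real_of_int r * y) / real_of_int q)
        \<longleftrightarrow> real_of_int dl * y < real_of_int m * j"
    using qp by (simp add: field_simps)
  moreover have "real_of_int m * ((j + real_of_int r * y) / real_of_int q) + real_of_int (n - e) * y < real_of_int m * real_of_int n
        \<longleftrightarrow> real_of_int (n * q - dl) * y < real_of_int m * (real_of_int (n * q) - j)"
    using qp by (simp add: field_simps)
  ultimately show ?thesis unfolding crow_def Op_def by auto
qed

lemma crow_sub: "crow m n e q r j \<subseteq> {0<..<real_of_int m}"
  unfolding crow_def using Op_y_bounds[OF m n] by auto

lemma crow_bdd: "bdd_above (crow m n e q r j)" "bdd_below (crow m n e q r j)"
  by (rule bdd_above_mono[OF _ crow_sub], simp) (rule bdd_below_mono[OF _ crow_sub], simp)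

lemma crow_conv:
  assumes "a \<in> crow m n e q r j" "b \<in> crow m n e q r j" "a \<le> y" "y \<le> b"
  shows "y \<in> crow m n e q r j"
proof -
  have "real_of_int dl * y \<le> max (real_of_int dl * a) (real_of_int dl * b)"
    by (rule lin_between[OF assms(3,4)])
  moreover have "real_of_int (n * q - dl) * y \<le> max (real_of_int (n * q - dl) * a) (real_of_int (n * q - dl) * b)"
    by (rule lin_between[OF assms(3,4)])
  ultimately show ?thesis using assms unfolding crow_iff by auto
qed

lemma crow_mix:
  assumes "y1 \<in> crow m n e q r j1" "y3 \<in> crow m n e q r j3" "0 \<le> t" "t \<le> 1"
  shows "t * y1 + (1 - t) * y3 \<in> crow m n e q r (t * j1 + (1 - t) * j3)"
proof -
  have a: "0 < y1" "real_of_int dl * y1 < real_of_int m * j1"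
      "real_of_int (n * q - dl) * y1 < real_of_int m * (real_of_int (n * q) - j1)"
    using assms(1) unfolding crow_iff by auto
  have b: "0 < y3" "real_of_int dl * y3 < real_of_int m * j3"
      "real_of_int (n * q - dl) * y3 < real_of_int m * (real_of_int (n * q) - j3)"
    using assms(2) unfolding crow_iff by auto
  have "t * 0 + (1 - t) * 0 < t * y1 + (1 - t) * y3" by (rule mix_strict) (use a b assms in auto)
  moreover have "t * (real_of_int dl * y1) + (1 - t) * (real_of_int dl * y3) < t * (real_of_int m * j1) + (1 - t) * (real_of_int m * j3)"
    by (rule mix_strict) (use a b assms in auto)
  moreover have "t * (real_of_int (n * q - dl) * y1) + (1 - t) * (real_of_int (n * q - dl) * y3)
      < t * (real_of_int m * (real_of_int (n * q) - j1)) + (1 - t) * (real_of_int m * (real_of_int (n * q) - j3))"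
    by (rule mix_strict) (use a b assms in auto)
  ultimately show ?thesis unfolding crow_iff by (simp add: algebra_simps)
qed

lemma Wpos: "W \<ge> n * q" "n * q > 0"
  using n q by (auto simp: max_def min_def)

lemma ext_nonneg: "ext m n e q r j \<ge> 0"
  unfolding ext_def by (rule len_nonneg[OF crow_bdd])

lemma diff_bound:
  assumes "y1 \<in> crow m n e q r j" "y2 \<in> crow m n e q r j" "y1 \<le> y2"
  shows "(y2 - y1) * real_of_int W \<le> real_of_int m * real_of_int n * real_of_int q"
proof -
  have a: "0 < y1" "real_of_int dl * y1 < real_of_int m * j"
      "real_of_int (n * q - dl) * y1 < real_of_int m * (real_of_int (n * q) - j)"
    using assms(1) unfolding crow_iff by auto
  have b: "0 < y2" "real_of_int dl * y2 < real_of_int m * j"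
      "real_of_int (n * q - dl) * y2 < real_of_int m * (real_of_int (n * q) - j)"
    using assms(2) unfolding crow_iff by auto
  have y2m: "y2 < real_of_int m" using subsetD[OF crow_sub assms(2)] by simp
  have nq: "real_of_int n * real_of_int q > 0" using n q by simp
  have y1nq: "y1 * (real_of_int n * real_of_int q) > 0" using a(1) nq by simp
  have nqi: "n * q > 0" using Wpos(2) .
  consider "dl \<le> 0" | "0 \<le> dl" "dl \<le> n * q" | "n * q \<le> dl" by linarith
  thus ?thesis
  proof cases
    case 1
    hence Weq: "W = n * q - dl" using nqi by (simp add: max_def min_def)
    have "(y2 - y1) * real_of_int W = real_of_int (n * q - dl) * y2 - y1 * (real_of_int n * real_of_int q) + real_of_int dl * y1"
      unfolding Weq by (simp add: algebra_simps)
    also have "\<dots> \<le> real_of_int m * real_of_int n * real_of_int q"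
      using a b y1nq by (simp add: algebra_simps)
    finally show ?thesis .
  next
    case 2
    hence Weq: "W = n * q" using nqi by (simp add: max_def min_def)
    have "(y2 - y1) * (real_of_int n * real_of_int q) \<le> real_of_int m * (real_of_int n * real_of_int q)"
      using a(1) y2m nq by (intro mult_right_mono) auto
    thus ?thesis unfolding Weq by (simp add: algebra_simps)
  next
    case 3
    hence Weq: "W = dl" using nqi by (simp add: max_def min_def)
    have "(y2 - y1) * real_of_int W = real_of_int dl * y2 + real_of_int (n * q - dl) * y1 - y1 * (real_of_int n * real_of_int q)"
      unfolding Weq by (simp add: algebra_simps)
    also have "\<dots> \<le> real_of_int m * real_of_int n * real_of_int q"
      using a b y1nq by (simp add: algebra_simps)
    finally show ?thesis .
  qed
qed

lemma ext_le: "ext m n e q r j \<le> real_of_int m * real_of_int n * real_of_int q / real_of_int W"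
proof -
  have Wp: "real_of_int W > 0" using Wpos by simp
  show ?thesis unfolding ext_def
  proof (rule len_le[OF crow_bdd])
    show "0 \<le> real_of_int m * real_of_int n * real_of_int q / real_of_int W" using m n q Wp by simp
    fix y1 y2 assume h: "y1 \<in> crow m n e q r j" "y2 \<in> crow m n e q r j"
    show "y2 - y1 \<le> real_of_int m * real_of_int n * real_of_int q / real_of_int W"
    proof (cases "y1 \<le> y2")
      case True
      from diff_bound[OF h True] Wp show ?thesis by (simp add: field_simps)
    next
      case False thus ?thesis using m n q Wp by (smt (verit) divide_nonneg_pos mult_nonneg_nonneg of_int_0_le_iff)
    qed
  qed
qed

lemma ext_qc:
  assumes "i < j" "j < k"
  shows "min (ext m n e q r i) (ext m n e q r k) \<le> ext m n e q r j"
proof (cases "crow m n e q r i = {} \<or> crow m n e q r k = {}")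
  case True
  hence "min (ext m n e q r i) (ext m n e q r k) \<le> 0" unfolding ext_def len_def by auto
  thus ?thesis using ext_nonneg by (meson order_trans)
next
  case False
  define t where "t = (k - j) / (k - i)"
  have t: "0 \<le> t" "t \<le> 1" unfolding t_def using assms by auto
  have "t * (k - i) = k - j" unfolding t_def using assms by simp
  hence jt: "t * i + (1 - t) * k = j" by (simp add: algebra_simps)
  have "ext m n e q r j \<ge> t * ext m n e q r i + (1 - t) * ext m n e q r k"
    unfolding ext_def
    by (rule len_mix) (use False crow_bdd t crow_mix[of _ i _ k t] jt in auto)
  moreover have "t * ext m n e q r i + (1 - t) * ext m n e q r k \<ge> min (ext m n e q r i) (ext m n e q r k)"
  proof -
    have "t * ext m n e q r i \<ge> t * min (ext m n e q r i) (ext m n e q r k)" using t by (intro mult_left_mono) auto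
    moreover have "(1 - t) * ext m n e q r k \<ge> (1 - t) * min (ext m n e q r i) (ext m n e q r k)" using t by (intro mult_left_mono) auto
    ultimately show ?thesis by (simp add: algebra_simps)
  qed
  ultimately show ?thesis by linarith
qed

lemma row_range:
  assumes "y \<in> crow m n e q r j"
  shows "real_of_int cmin < j" "j < real_of_int cmax"
proof -
  have a: "0 < y" "real_of_int dl * y < real_of_int m * j"
      "real_of_int (n * q - dl) * y < real_of_int m * (real_of_int (n * q) - j)"
    using assms unfolding crow_iff by auto
  have ym: "y < real_of_int m" using subsetD[OF crow_sub assms] by simp
  show "real_of_int cmin < j"
  proof (rule ccontr)
    assume "\<not> real_of_int cmin < j"
    moreover have "cmin \<le> 0" "cmin \<le> dl" by auto
    hence "real_of_int cmin \<le> 0" "real_of_int cmin \<le> real_of_int dl" by (simp_all only: of_int_le_iff of_int_0_le_iff)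
    ultimately have j: "j \<le> 0" "j \<le> real_of_int dl" by linarith+
    show False
    proof (cases "dl \<ge> 0")
      case True
      hence "0 \<le> real_of_int dl" by (simp only: of_int_0_le_iff)
      hence "real_of_int dl * y \<ge> 0" using a(1) by (intro mult_nonneg_nonneg) auto
      moreover have "real_of_int m * j \<le> 0" using j m by (simp add: mult_nonneg_nonpos)
      ultimately show False using a by linarith
    next
      case False
      have "real_of_int m * j \<le> real_of_int m * real_of_int dl" using j m by simp
      hence h: "real_of_int dl * y < real_of_int dl * real_of_int m" using a by (simp add: mult.commute)
      have "real_of_int dl < 0" using False by (simp only: of_int_less_0_iff not_le)
      hence "y > real_of_int m" using h mult_less_cancel_left_neg by blast
      thus False using ym by simp
    qed
  qed
  show "j < real_of_int cmax"
  proof (rule ccontr)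
    assume "\<not> j < real_of_int cmax"
    moreover have "cmax \<ge> n * q" "cmax \<ge> dl" by auto
    hence "real_of_int cmax \<ge> real_of_int (n * q)" "real_of_int cmax \<ge> real_of_int dl" by (simp_all only: of_int_le_iff)
    ultimately have j: "j \<ge> real_of_int (n * q)" "j \<ge> real_of_int dl" by linarith+
    show False
    proof (cases "dl \<le> n * q")
      case True
      hence "0 \<le> n * q - dl" by simp
      hence "0 \<le> real_of_int (n * q - dl)" by (simp only: of_int_0_le_iff)
      hence "real_of_int (n * q - dl) * y \<ge> 0" using a(1) by (intro mult_nonneg_nonneg) auto
      moreover have "real_of_int m * (real_of_int (n * q) - j) \<le> 0" using j m by (simp add: mult_nonneg_nonpos)
      ultimately show False using a by linarith
    next
      case False
      have "real_of_int m * (real_of_int (n * q) - j) \<le> real_of_int m * (real_of_int (n * q) - real_of_int dl)"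
        using j m by simp
      hence h: "real_of_int (n * q - dl) * y < real_of_int (n * q - dl) * real_of_int m" using a by (simp add: algebra_simps)
      have "n * q - dl < 0" using False by simp
      hence "real_of_int (n * q - dl) < 0" by (simp only: of_int_less_0_iff)
      hence "y > real_of_int m" using h mult_less_cancel_left_neg by blast
      thus False using ym by simp
    qed
  qed
qed

end

definition Prow :: "int \<Rightarrow> int \<Rightarrow> int \<Rightarrow> int \<Rightarrow> int \<Rightarrow> int \<Rightarrow> (int \<times> int) set" where
  "Prow m n e q r j = {p \<in> LP m n e. q * fst p - r * snd p = j}"

definition Mrow :: "int \<Rightarrow> int \<Rightarrow> int \<Rightarrow> int \<Rightarrow> int \<Rightarrow> int \<Rightarrow> int \<Rightarrow> (int \<times> int) set" where
  "Mrow m n e q r d k = {p \<in> LP m n e. d dvd fst p \<and> d dvd snd p \<and> q * fst p - r * snd p = d * k}"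

context
  fixes m n e q r :: int
  assumes m: "m > 0" and n: "n > 0" and e0: "0 \<le> e" and em: "e < m" and q: "q \<ge> 1" and cop: "coprime q r"
begin

lemma LP_in_crow:
  assumes "(x,y) \<in> LP m n e"
  shows "real_of_int y \<in> crow m n e q r (real_of_int (q * x - r * y))"
proof -
  have "(real_of_int (q * x - r * y) + real_of_int r * real_of_int y) / real_of_int q = real_of_int x"
    using q by (simp add: field_simps)
  thus ?thesis using assms unfolding crow_def LP_def by simp
qed

lemma LP_row:
  assumes "(x,y) \<in> LP m n e"
  shows "min 0 (min (n * q) (q * e - r * m)) < q * x - r * y" "q * x - r * y < max 0 (max (n * q) (q * e - r * m))"
  using row_range[OF m n e0 em q cop LP_in_crow[OF assms]] by (simp_all only: of_int_less_iff)

lemma finite_Prow: "finite (Prow m n e q r j)"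
  unfolding Prow_def using finite_LP[OF m n e0 em] by simp

lemma finite_Mrow: "finite (Mrow m n e q r d k)"
  unfolding Mrow_def using finite_LP[OF m n e0 em] by simp

lemma card_Prow_ge:
  "real (card (Prow m n e q r j)) \<ge> ext m n e q r (real_of_int j) / real_of_int q - 1"
proof (cases "crow m n e q r (real_of_int j) = {}")
  case True
  hence "ext m n e q r (real_of_int j) = 0" unfolding ext_def len_def by simp
  thus ?thesis by simp
next
  case False
  define C where "C = crow m n e q r (real_of_int j)"
  define a where "a = Inf C"
  define b where "b = Sup C"
  have Cne: "C \<noteq> {}" using False unfolding C_def .
  have extab: "ext m n e q r (real_of_int j) = b - a" unfolding ext_def len_def a_def b_def C_def using False by simp
  have qp: "real_of_int q > 0" using q by simp
  obtain u v where uv: "u * q + v * r = 1" using bezout_int[of q r] cop by (auto simp: coprime_iff_gcd_eq_1)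
  define x0 where "x0 = u * j"
  define y0 where "y0 = - v * j"
  have row0: "q * x0 - r * y0 = j" unfolding x0_def y0_def using uv by (metis mult.commute mult.left_commute mult_1 mult_minus_left diff_minus_eq_add distrib_right)
  define T where "T = {t::int. (a - real_of_int y0) / real_of_int q < real_of_int t \<and> real_of_int t < (b - real_of_int y0) / real_of_int q}"
  have cardT: "real (card T) \<ge> (b - a) / real_of_int q - 1"
  proof -
    have "real (card T) \<ge> (b - real_of_int y0) / real_of_int q - (a - real_of_int y0) / real_of_int q - 1"
      unfolding T_def by (rule card_int_open_ge)
    thus ?thesis by (simp add: diff_divide_distrib)
  qed
  define f where "f = (\<lambda>t::int. (x0 + r * t, y0 + q * t))"
  have inj: "inj_on f T" unfolding f_def inj_on_def using q by auto
  have img: "f ` T \<subseteq> Prow m n e q r j"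
  proof
    fix p assume "p \<in> f ` T"
    then obtain t where t: "t \<in> T" "p = f t" by auto
    define y where "y = real_of_int (y0 + q * t)"
    have "a < y" "y < b" using t(1) qp unfolding T_def y_def by (auto simp: field_simps)
    have bC: "bdd_above C" "bdd_below C" unfolding C_def using crow_bdd[OF m n e0 em q cop] by auto
    have cvC: "\<And>a b y. a \<in> C \<Longrightarrow> b \<in> C \<Longrightarrow> a \<le> y \<Longrightarrow> y \<le> b \<Longrightarrow> y \<in> C"
      unfolding C_def using crow_conv[OF m n e0 em q cop] by blast
    have yC: "y \<in> C" by (rule len_inner[OF Cne bC cvC]) (use \<open>a < y\<close> \<open>y < b\<close> in \<open>simp_all add: a_def b_def\<close>)
    have "(real_of_int j + real_of_int r * y) / real_of_int q = real_of_int (x0 + r * t)"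
    proof -
      have rr: "real_of_int (q * x0 - r * y0) = real_of_int j" using row0 by simp
      have "real_of_int j + real_of_int r * y = real_of_int q * real_of_int (x0 + r * t)"
        unfolding y_def using rr by (simp add: algebra_simps)
      thus ?thesis using qp by simp
    qed
    hence "(real_of_int (x0 + r * t), y) \<in> Op m n e" using yC unfolding C_def crow_def by simp
    moreover have "q * (x0 + r * t) - r * (y0 + q * t) = j" using row0 by (simp add: algebra_simps)
    ultimately show "p \<in> Prow m n e q r j" unfolding Prow_def LP_def t(2) f_def y_def by simp
  qed
  have "card T \<le> card (Prow m n e q r j)" by (rule card_inj_on_le[OF inj img finite_Prow])
  hence "real (card T) \<le> real (card (Prow m n e q r j))" by simp
  thus ?thesis using cardT extab by simp
qed

lemma card_Mrow_le:
  assumes d: "d \<ge> 1"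
  shows "real (card (Mrow m n e q r d k)) \<le> ext m n e q r (real_of_int (d * k)) / (real_of_int d * real_of_int q) + 1"
proof (cases "Mrow m n e q r d k = {}")
  case True
  have "ext m n e q r (real_of_int (d * k)) \<ge> 0" by (rule ext_nonneg[OF m n e0 em q cop])
  hence "ext m n e q r (real_of_int (d * k)) / (real_of_int d * real_of_int q) \<ge> 0" using d q by simp
  thus ?thesis using True by simp
next
  case False
  then obtain x0 y0 where p0: "(x0, y0) \<in> Mrow m n e q r d k" by auto
  define C where "C = crow m n e q r (real_of_int (d * k))"
  define a where "a = Inf C"
  define b where "b = Sup C"
  define s0 where "s0 = y0 div d"
  have qp: "real_of_int q > 0" and dp: "real_of_int d > 0" using q d by simp_all
  have inC: "real_of_int y \<in> C" if "(x,y) \<in> Mrow m n e q r d k" for x y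
  proof -
    have "(x,y) \<in> LP m n e" "q * x - r * y = d * k" using that unfolding Mrow_def by auto
    thus ?thesis using LP_in_crow unfolding C_def by metis
  qed
  have Cne: "C \<noteq> {}" using inC[OF p0] by auto
  have extab: "ext m n e q r (real_of_int (d * k)) = b - a" unfolding ext_def len_def a_def b_def C_def using Cne C_def by simp
  have key: "\<exists>t. y = d * (s0 + q * t)" if "(x,y) \<in> Mrow m n e q r d k" for x y
  proof -
    have h: "d dvd x" "d dvd y" "q * x - r * y = d * k" using that unfolding Mrow_def by auto
    have h0: "d dvd x0" "d dvd y0" "q * x0 - r * y0 = d * k" using p0 unfolding Mrow_def by auto
    obtain x' y' where xy: "x = d * x'" "y = d * y'" using h by (meson dvdE)
    obtain x0' y0' where xy0: "x0 = d * x0'" "y0 = d * y0'" using h0 by (meson dvdE)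
    have s0: "s0 = y0'" unfolding s0_def xy0 using d by simp
    have "d * (q * x' - r * y') = d * (q * x0' - r * y0')" using h(3) h0(3) xy xy0 by (simp add: algebra_simps)
    hence "q * x' - r * y' = q * x0' - r * y0'" using d by simp
    hence "q * (x' - x0') = r * (y' - y0')" by (simp add: algebra_simps)
    hence "q dvd r * (y' - y0')" by (metis dvd_triv_left)
    hence "q dvd (y' - y0')" using cop by (simp add: coprime_dvd_mult_right_iff)
    then obtain t where "y' - y0' = q * t" by (meson dvdE)
    thus ?thesis using xy s0 by (intro exI[of _ t]) (simp add: algebra_simps)
  qed
  define g where "g = (\<lambda>p::int\<times>int. (snd p div d - s0) div q)"
  have gy: "snd p = d * (s0 + q * g p)" if "p \<in> Mrow m n e q r d k" for p
  proof -
    obtain x y where p: "p = (x,y)" by (cases p)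
    have "(x,y) \<in> Mrow m n e q r d k" using that p by simp
    then obtain t where t: "y = d * (s0 + q * t)" using key by blast
    have "g p = t" unfolding g_def p using t d q by simp
    thus ?thesis using t p by simp
  qed
  have inj: "inj_on g (Mrow m n e q r d k)"
  proof (rule inj_onI)
    fix p1 p2 assume p: "p1 \<in> Mrow m n e q r d k" "p2 \<in> Mrow m n e q r d k" "g p1 = g p2"
    have y: "snd p1 = snd p2" using gy[OF p(1)] gy[OF p(2)] p(3) by simp
    have "q * fst p1 = q * fst p2" using p y unfolding Mrow_def by (simp add: algebra_simps)
    hence "fst p1 = fst p2" using q by simp
    thus "p1 = p2" using y by (simp add: prod_eq_iff)
  qed
  define T where "T = {t::int. (a / real_of_int d - real_of_int s0) / real_of_int q \<le> real_of_int t \<and>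
        real_of_int t \<le> (b / real_of_int d - real_of_int s0) / real_of_int q}"
  have img: "g ` Mrow m n e q r d k \<subseteq> T"
  proof
    fix t assume "t \<in> g ` Mrow m n e q r d k"
    then obtain p where p: "p \<in> Mrow m n e q r d k" "t = g p" by auto
    have yC: "real_of_int (snd p) \<in> C" using inC[of "fst p" "snd p"] p(1) by simp
    have "a \<le> real_of_int (snd p)" "real_of_int (snd p) \<le> b"
      using len_bounds[OF Cne _ _ yC] crow_bdd[OF m n e0 em q cop] unfolding a_def b_def C_def by auto
    hence "a \<le> real_of_int d * (real_of_int s0 + real_of_int q * real_of_int t)"
          "real_of_int d * (real_of_int s0 + real_of_int q * real_of_int t) \<le> b"
      using gy[OF p(1)] p(2) by (simp_all add: algebra_simps)
    thus "t \<in> T" unfolding T_def using qp dp by (auto simp: field_simps)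
  qed
  have abn: "b - a \<ge> 0" using extab ext_nonneg[OF m n e0 em q cop, of "real_of_int (d * k)"] by linarith
  have finT: "finite T"
  proof -
    have "T = {\<lceil>(a / real_of_int d - real_of_int s0) / real_of_int q\<rceil> .. \<lfloor>(b / real_of_int d - real_of_int s0) / real_of_int q\<rfloor>}"
      unfolding T_def by (auto simp: ceiling_le_iff le_floor_iff)
    thus ?thesis by simp
  qed
  have "card (Mrow m n e q r d k) \<le> card T" by (rule card_inj_on_le[OF inj img finT])
  hence "real (card (Mrow m n e q r d k)) \<le> real (card T)" by simp
  also have "\<dots> \<le> (b / real_of_int d - real_of_int s0) / real_of_int q - (a / real_of_int d - real_of_int s0) / real_of_int q + 1"
    unfolding T_def
  proof (rule card_int_closed_le)
    have "(b / real_of_int d - real_of_int s0) / real_of_int q - (a / real_of_int d - real_of_int s0) / real_of_int q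
        = (b - a) / (real_of_int d * real_of_int q)" using qp dp by (simp add: field_simps)
    thus "0 \<le> (b / real_of_int d - real_of_int s0) / real_of_int q - (a / real_of_int d - real_of_int s0) / real_of_int q + 1"
      using abn qp dp by simp
  qed
  also have "(b / real_of_int d - real_of_int s0) / real_of_int q - (a / real_of_int d - real_of_int s0) / real_of_int q
        = (b - a) / (real_of_int d * real_of_int q)" using qp dp by (simp add: field_simps)
  finally show ?thesis using extab by simp
qed

end

lemma card_nonzero_open:
  fixes \<alpha> \<beta> :: real
  assumes "\<alpha> \<le> 0" "0 \<le> \<beta>"
  shows "real (card ({x::int. \<alpha> < real_of_int x \<and> real_of_int x < \<beta>} - {0})) \<le> \<beta> - \<alpha>"
proof -
  define S where "S = {x::int. \<alpha> < real_of_int x \<and> real_of_int x < \<beta>}"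
  have Seq: "S = {\<lfloor>\<alpha>\<rfloor> + 1 .. \<lceil>\<beta>\<rceil> - 1}" unfolding S_def by (rule int_open_eq)
  have f1: "real_of_int \<lfloor>\<alpha>\<rfloor> \<le> \<alpha>" "\<alpha> < real_of_int \<lfloor>\<alpha>\<rfloor> + 1" by linarith+
  have f2: "real_of_int \<lceil>\<beta>\<rceil> - 1 < \<beta>" "\<beta> \<le> real_of_int \<lceil>\<beta>\<rceil>" by linarith+
  show ?thesis
  proof (cases "0 \<in> S")
    case True
    hence h: "\<lfloor>\<alpha>\<rfloor> + 1 \<le> 0" "0 \<le> \<lceil>\<beta>\<rceil> - 1" unfolding Seq by auto
    have fS: "finite S" unfolding Seq by simp
    have cS1: "card S \<ge> 1" using True fS by (metis One_nat_def Suc_leI card_gt_0_iff empty_iff)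
    have "card (S - {0}) = card S - 1" using True fS by (simp add: card_Diff_singleton)
    hence "real (card (S - {0})) = real (card S) - 1" using cS1 by (simp add: of_nat_diff)
    moreover have "\<lceil>\<beta>\<rceil> - 1 - \<lfloor>\<alpha>\<rfloor> \<ge> 0" using h by linarith
    hence "real (card S) = real_of_int (\<lceil>\<beta>\<rceil> - 1 - \<lfloor>\<alpha>\<rfloor>)" unfolding Seq by (simp only: card_atLeastAtMost_int of_nat_nat)
    ultimately have "real (card (S - {0})) = real_of_int (\<lceil>\<beta>\<rceil> - 1 - \<lfloor>\<alpha>\<rfloor>) - 1" by simp
    thus ?thesis unfolding S_def using f1 f2 by linarith
  next
    case False
    hence "S - {0} = S" by simp
    hence "real (card (S - {0})) = real (nat (\<lceil>\<beta>\<rceil> - 1 - \<lfloor>\<alpha>\<rfloor>))" unfolding Seq by simp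
    moreover have "\<lfloor>\<alpha>\<rfloor> + 1 > 0 \<or> \<lceil>\<beta>\<rceil> - 1 < 0" using False unfolding Seq atLeastAtMost_iff by presburger
    ultimately show ?thesis unfolding S_def using f1 f2 assms by linarith
  qed
qed

lemma card_Kd:
  fixes A B d :: int
  assumes "A \<le> 0" "0 \<le> B" "d \<ge> 1"
  shows "real (card {k. k \<noteq> 0 \<and> A < d * k \<and> d * k < B}) \<le> real_of_int (B - A) / real_of_int d"
proof -
  have dp: "real_of_int d > 0" using assms by simp
  have "{k. k \<noteq> 0 \<and> A < d * k \<and> d * k < B} =
        {x::int. real_of_int A / real_of_int d < real_of_int x \<and> real_of_int x < real_of_int B / real_of_int d} - {0}"
  proof -
    have "A < d * k \<longleftrightarrow> real_of_int A / real_of_int d < real_of_int k" for k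
      using dp by (simp add: field_simps) (metis of_int_less_iff of_int_mult)
    moreover have "d * k < B \<longleftrightarrow> real_of_int k < real_of_int B / real_of_int d" for k
      using dp by (simp add: field_simps) (metis of_int_less_iff of_int_mult)
    ultimately show ?thesis by auto
  qed
  also have "real (card \<dots>) \<le> real_of_int B / real_of_int d - real_of_int A / real_of_int d"
    by (rule card_nonzero_open) (use assms dp in \<open>auto simp: divide_nonpos_pos\<close>)
  also have "\<dots> = real_of_int (B - A) / real_of_int d" by (simp add: diff_divide_distrib)
  finally show ?thesis .
qed

context
  fixes m n e q r :: int
  assumes m: "m > 0" and n: "n > 0" and e0: "0 \<le> e" and em: "e < m" and q: "q \<ge> 1" and cop: "coprime q r"
begin

lemma sum_ext_rows:
  defines "c0 \<equiv> min 0 (min (n * q) (q * e - r * m))" and "c1 \<equiv> max 0 (max (n * q) (q * e - r * m))"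
  shows "(\<Sum>j\<in>{c0+1..c1-1}. ext m n e q r (real_of_int j))
           \<le> real_of_int q * (real (card (LP m n e)) + real_of_int (c1 - c0 - 1))"
proof -
  define R where "R = {c0+1..c1-1}"
  have nq: "n * q > 0" using n q by simp
  have c01: "c0 \<le> 0" "c1 \<ge> n * q" unfolding c0_def c1_def by auto
  have LPU: "LP m n e = (\<Union>j\<in>R. Prow m n e q r j)"
  proof
    show "LP m n e \<subseteq> (\<Union>j\<in>R. Prow m n e q r j)"
    proof
      fix p assume p: "p \<in> LP m n e"
      obtain x y where xy: "p = (x,y)" by (cases p)
      have "c0 < q * x - r * y" "q * x - r * y < c1"
        using LP_row[OF m n e0 em q cop, of x y] p xy unfolding c0_def c1_def by auto
      thus "p \<in> (\<Union>j\<in>R. Prow m n e q r j)" using p xy unfolding R_def Prow_def by auto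
    qed
  qed (auto simp: Prow_def)
  have "card (LP m n e) = (\<Sum>j\<in>R. card (Prow m n e q r j))"
    unfolding LPU by (rule card_UN_disjoint) (simp add: R_def, simp add: finite_Prow[OF m n e0 em q cop], force simp: Prow_def)
  hence cardLP: "real (card (LP m n e)) = (\<Sum>j\<in>R. real (card (Prow m n e q r j)))" by simp
  have cardR: "real (card R) = real_of_int (c1 - c0 - 1)"
  proof -
    have "c1 - c0 - 1 \<ge> 0" using c01 nq by simp
    thus ?thesis unfolding R_def by simp
  qed
  have "(\<Sum>j\<in>R. ext m n e q r (real_of_int j)) \<le> (\<Sum>j\<in>R. real_of_int q * (real (card (Prow m n e q r j)) + 1))"
  proof (rule sum_mono)
    fix j assume "j \<in> R"
    have "ext m n e q r (real_of_int j) / real_of_int q - 1 \<le> real (card (Prow m n e q r j))"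
      by (rule card_Prow_ge[OF m n e0 em q cop])
    thus "ext m n e q r (real_of_int j) \<le> real_of_int q * (real (card (Prow m n e q r j)) + 1)"
      using q by (simp add: field_simps)
  qed
  also have "\<dots> = real_of_int q * ((\<Sum>j\<in>R. real (card (Prow m n e q r j))) + real (card R))"
    by (simp add: sum_distrib_left sum.distrib distrib_left)
  finally show ?thesis unfolding R_def[symmetric] using cardLP cardR by simp
qed

lemma caseB_nonprim:
  defines "Wd \<equiv> max 0 (max (n * q) (q * e - r * m)) - min 0 (min (n * q) (q * e - r * m))"
  shows "real (card (Pnon m n e)) \<le> real_of_int m * real_of_int n / real_of_int Wd + 1
           + (real (card (LP m n e)) + real_of_int Wd) * S2 (nat (Wd - 1))
           + (real_of_int m * real_of_int n / real_of_int Wd + real_of_int Wd) * S1 (nat (Wd - 1))"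
proof -
  define c0 where "c0 = min 0 (min (n * q) (q * e - r * m))"
  define c1 where "c1 = max 0 (max (n * q) (q * e - r * m))"
  have Wc: "Wd = c1 - c0" unfolding Wd_def c0_def c1_def ..
  have nq: "n * q > 0" using n q by simp
  have c01: "c0 \<le> 0" "c1 \<ge> n * q" unfolding c0_def c1_def by auto
  have Wp: "real_of_int Wd > 0" using c01 nq Wc by simp
  have qp: "real_of_int q > 0" using q by simp
  define D where "D = Dn (nat (Wd - 1))"
  define K' where "K' = (\<lambda>d::nat. {k. k \<noteq> 0 \<and> c0 < int d * k \<and> int d * k < c1})"
  define L where "L = real (card (LP m n e))"
  define Mx where "Mx = real_of_int m * real_of_int n * real_of_int q / real_of_int Wd"
  have finK': "finite (K' d)" if "d \<in> D" for d
  proof -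
    have "K' d \<subseteq> {c0 .. c1}"
    proof
      fix k assume "k \<in> K' d"
      hence k: "k \<noteq> 0" "c0 < int d * k" "int d * k < c1" unfolding K'_def by auto
      have d1: "int d \<ge> 1" using that unfolding D_def Dn_def by auto
      show "k \<in> {c0..c1}"
      proof (cases "k > 0")
        case True
        hence "1 * k \<le> int d * k" using d1 by (intro mult_right_mono) auto
        hence "k \<le> c1" using k by simp
        thus ?thesis using c01 True by simp
      next
        case False
        hence "int d * k \<le> 1 * k" using d1 by (intro mult_right_mono_neg) auto
        hence "c0 \<le> k" using k by simp
        thus ?thesis using c01 False nq by simp
      qed
    qed
    thus ?thesis by (rule finite_subset) simp
  qed
  have sub: "Pnon m n e \<subseteq> Prow m n e q r 0 \<union> (\<Union>d\<in>D. \<Union>k\<in>K' d. Mrow m n e q r (int d) k)"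
  proof
    fix p assume pP: "p \<in> Pnon m n e"
    obtain x y where xy: "p = (x,y)" by (cases p)
    have LPp: "(x,y) \<in> LP m n e" and g: "gcd x y \<noteq> 1" using pP xy unfolding Pnon_def by auto
    show "p \<in> Prow m n e q r 0 \<union> (\<Union>d\<in>D. \<Union>k\<in>K' d. Mrow m n e q r (int d) k)"
    proof (cases "q * x - r * y = 0")
      case True thus ?thesis using LPp xy unfolding Prow_def by auto
    next
      case False
      have y0: "0 < y" using LP_bounds[OF m n e0 em LPp] by auto
      obtain l where l: "prime l" "int l dvd x" "int l dvd y" using gcd_ne1_prime[of y x] y0 g by auto
      have "int l dvd q * x - r * y" using l by simp
      then obtain k where k: "q * x - r * y = int l * k" by (meson dvdE)
      have kne: "k \<noteq> 0" using k False by auto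
      have rr: "c0 < q * x - r * y" "q * x - r * y < c1"
        using LP_row[OF m n e0 em q cop LPp] unfolding c0_def c1_def by auto
      have "\<bar>int l\<bar> \<le> \<bar>q * x - r * y\<bar>" using dvd_imp_le_int[OF False] \<open>int l dvd q * x - r * y\<close> .
      moreover have "\<bar>q * x - r * y\<bar> \<le> Wd - 1"
      proof (cases "q * x - r * y \<ge> 0")
        case True thus ?thesis using rr c01 Wc by simp
      next
        case False thus ?thesis using rr c01 Wc nq by simp
      qed
      ultimately have "l \<le> nat (Wd - 1)" by simp
      hence lD: "l \<in> D" unfolding D_def using l(1) by (intro prime_in_Dn)
      have "k \<in> K' l" unfolding K'_def using kne rr k by auto
      moreover have "p \<in> Mrow m n e q r (int l) k" unfolding Mrow_def using LPp xy l k by auto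
      ultimately show ?thesis using lD by blast
    qed
  qed
  have finD: "finite D" unfolding D_def by (rule finite_Dn)
  have "card (Pnon m n e) \<le> card (Prow m n e q r 0 \<union> (\<Union>d\<in>D. \<Union>k\<in>K' d. Mrow m n e q r (int d) k))"
    by (rule card_mono[OF _ sub]) (simp add: finite_Prow[OF m n e0 em q cop] finite_Mrow[OF m n e0 em q cop] finD finK')
  also have "\<dots> \<le> card (Prow m n e q r 0) + card (\<Union>d\<in>D. \<Union>k\<in>K' d. Mrow m n e q r (int d) k)"
    by (rule card_Un_le)
  also have "card (\<Union>d\<in>D. \<Union>k\<in>K' d. Mrow m n e q r (int d) k) \<le> (\<Sum>d\<in>D. card (\<Union>k\<in>K' d. Mrow m n e q r (int d) k))"
    by (rule card_UN_le[OF finD])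
  also have "\<dots> \<le> (\<Sum>d\<in>D. \<Sum>k\<in>K' d. card (Mrow m n e q r (int d) k))"
    by (rule sum_mono) (rule card_UN_le[OF finK'])
  finally have "card (Pnon m n e) \<le> card (Prow m n e q r 0) + (\<Sum>d\<in>D. \<Sum>k\<in>K' d. card (Mrow m n e q r (int d) k))"
    by simp
  hence "real (card (Pnon m n e)) \<le> real (card (Prow m n e q r 0) + (\<Sum>d\<in>D. \<Sum>k\<in>K' d. card (Mrow m n e q r (int d) k)))"
    by (simp only: of_nat_le_iff)
  also have "\<dots> = real (card (Prow m n e q r 0)) + (\<Sum>d\<in>D. \<Sum>k\<in>K' d. real (card (Mrow m n e q r (int d) k)))"
    by simp
  finally have main: "real (card (Pnon m n e)) \<le> real (card (Prow m n e q r 0)) + (\<Sum>d\<in>D. \<Sum>k\<in>K' d. real (card (Mrow m n e q r (int d) k)))" .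
  have row0: "real (card (Prow m n e q r 0)) \<le> real_of_int m * real_of_int n / real_of_int Wd + 1"
  proof -
    have "Prow m n e q r 0 = Mrow m n e q r 1 0" unfolding Prow_def Mrow_def by simp
    hence "real (card (Prow m n e q r 0)) \<le> ext m n e q r (real_of_int (1 * 0)) / (real_of_int 1 * real_of_int q) + 1"
      using card_Mrow_le[OF m n e0 em q cop, of 1 0] by simp
    also have "ext m n e q r (real_of_int (1 * 0)) / (real_of_int 1 * real_of_int q) \<le> Mx / real_of_int q"
    proof -
      have "ext m n e q r (real_of_int (1 * 0)) \<le> Mx"
        using ext_le[OF m n e0 em q cop, of "real_of_int (1 * 0)"] unfolding Mx_def Wd_def by simp
      thus ?thesis using qp by (simp add: divide_right_mono)
    qed
    also have "Mx / real_of_int q = real_of_int m * real_of_int n / real_of_int Wd" unfolding Mx_def using qp by simp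
    finally show ?thesis by simp
  qed
  have rows: "(\<Sum>j\<in>{c0+1..c1-1}. ext m n e q r (real_of_int j)) \<le> real_of_int q * (L + real_of_int (Wd - 1))"
    using sum_ext_rows unfolding L_def c0_def c1_def Wc by (simp add: algebra_simps)
  have perd: "(\<Sum>k\<in>K' d. real (card (Mrow m n e q r (int d) k)))
      \<le> (L + real_of_int Wd) * (1 / (real d)^2) + (real_of_int m * real_of_int n / real_of_int Wd + real_of_int Wd) * (1 / real d)"
    if dD: "d \<in> D" for d
  proof -
    have d1: "int d \<ge> 1" using dD unfolding D_def Dn_def by auto
    have dp: "real d > 0" using d1 by simp
    have "(\<Sum>k\<in>K' d. real (card (Mrow m n e q r (int d) k)))
        \<le> (\<Sum>k\<in>K' d. ext m n e q r (real_of_int (int d * k)) / (real_of_int (int d) * real_of_int q) + 1)"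
      by (rule sum_mono) (rule card_Mrow_le[OF m n e0 em q cop d1])
    also have "\<dots> = (\<Sum>k\<in>K' d. ext m n e q r (real_of_int (int d * k))) / (real d * real_of_int q) + real (card (K' d))"
      by (simp add: sum.distrib sum_divide_distrib)
    finally have S1: "(\<Sum>k\<in>K' d. real (card (Mrow m n e q r (int d) k)))
        \<le> (\<Sum>k\<in>K' d. ext m n e q r (real_of_int (int d * k))) / (real d * real_of_int q) + real (card (K' d))" .
    have "(\<Sum>k\<in>K' d. ext m n e q r (real_of_int (int d * k))) \<le> (\<Sum>k\<in>{k. c0+1 \<le> int d * k \<and> int d * k \<le> c1-1}. ext m n e q r (real_of_int (int d * k)))"
    proof (rule sum_mono2)
      show "finite {k. c0+1 \<le> int d * k \<and> int d * k \<le> c1-1}"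
      proof -
        have "{k. c0+1 \<le> int d * k \<and> int d * k \<le> c1-1} \<subseteq> K' d \<union> {0}" unfolding K'_def by auto
        thus ?thesis using finK'[OF dD] finite_subset by blast
      qed
      show "K' d \<subseteq> {k. c0+1 \<le> int d * k \<and> int d * k \<le> c1-1}" unfolding K'_def by auto
    qed (rule ext_nonneg[OF m n e0 em q cop])
    also have "\<dots> \<le> (\<Sum>j\<in>{c0+1..c1-1}. ext m n e q r (real_of_int j)) / real_of_int (int d) + Mx"
    proof (rule sampling)
      show "1 \<le> int d" by (rule d1)
      show "\<And>j. 0 \<le> ext m n e q r (real_of_int j)" by (rule ext_nonneg[OF m n e0 em q cop])
      show "\<And>j. ext m n e q r (real_of_int j) \<le> Mx" unfolding Mx_def Wd_def by (rule ext_le[OF m n e0 em q cop])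
      show "0 \<le> Mx" unfolding Mx_def using m n q Wp by simp
      fix i j k :: int assume "c0 + 1 \<le> i" "i < j" "j < k" "k \<le> c1 - 1"
      thus "min (ext m n e q r (real_of_int i)) (ext m n e q r (real_of_int k)) \<le> ext m n e q r (real_of_int j)"
        by (intro ext_qc[OF m n e0 em q cop]) auto
    qed
    also have "\<dots> \<le> real_of_int q * (L + real_of_int (Wd - 1)) / real d + Mx"
      using rows dp by (simp add: divide_right_mono)
    finally have A: "(\<Sum>k\<in>K' d. ext m n e q r (real_of_int (int d * k))) \<le> real_of_int q * (L + real_of_int (Wd - 1)) / real d + Mx" .
    have "(\<Sum>k\<in>K' d. ext m n e q r (real_of_int (int d * k))) / (real d * real_of_int q)
        \<le> (real_of_int q * (L + real_of_int (Wd - 1)) / real d + Mx) / (real d * real_of_int q)"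
      using A dp qp by (simp add: divide_right_mono)
    also have "\<dots> = (L + real_of_int (Wd - 1)) * (1 / (real d)^2) + real_of_int m * real_of_int n / real_of_int Wd * (1 / real d)"
      unfolding Mx_def using dp qp Wp by (simp add: field_simps power2_eq_square)
    also have "\<dots> \<le> (L + real_of_int Wd) * (1 / (real d)^2) + real_of_int m * real_of_int n / real_of_int Wd * (1 / real d)"
      using dp by (simp add: divide_right_mono)
    finally have B: "(\<Sum>k\<in>K' d. ext m n e q r (real_of_int (int d * k))) / (real d * real_of_int q)
        \<le> (L + real_of_int Wd) * (1 / (real d)^2) + real_of_int m * real_of_int n / real_of_int Wd * (1 / real d)" .
    have C: "real (card (K' d)) \<le> real_of_int Wd * (1 / real d)"
      using card_Kd[of c0 c1 "int d"] c01 nq d1 Wc unfolding K'_def by simp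
    show ?thesis using S1 B C by (simp add: algebra_simps)
  qed
  have "(\<Sum>d\<in>D. \<Sum>k\<in>K' d. real (card (Mrow m n e q r (int d) k)))
       \<le> (\<Sum>d\<in>D. (L + real_of_int Wd) * (1 / (real d)^2) + (real_of_int m * real_of_int n / real_of_int Wd + real_of_int Wd) * (1 / real d))"
    by (rule sum_mono) (rule perd)
  also have "\<dots> = (L + real_of_int Wd) * S2 (nat (Wd - 1)) + (real_of_int m * real_of_int n / real_of_int Wd + real_of_int Wd) * S1 (nat (Wd - 1))"
    unfolding S1_def S2_def D_def by (simp add: sum.distrib sum_distrib_left)
  finally show ?thesis using main row0 unfolding L_def by linarith
qed

end

lemma exp1_gt: "exp 1 > (2718/1000::real)"
  using e_approx_32 by (simp add: abs_if split: if_split_asm)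

lemma exp_nat_ge: "exp (real k) \<ge> (2718/1000::real) ^ k"
proof -
  have "exp (real k) = exp 1 ^ k" by (simp add: exp_of_nat_mult[symmetric])
  moreover have "(2718/1000::real) ^ k \<le> exp 1 ^ k" using exp1_gt by (intro power_mono) auto
  ultimately show ?thesis by simp
qed

lemma exp_nat_le: "exp (real k) \<le> (272/100::real) ^ k"
proof -
  have "exp (real k) = exp 1 ^ k" by (simp add: exp_of_nat_mult[symmetric])
  moreover have "exp 1 ^ k \<le> (272/100::real) ^ k" using e_less_272 by (intro power_mono) auto
  ultimately show ?thesis by simp
qed

lemma ln_le_nat:
  assumes "0 < x" "x \<le> (2718/1000::real) ^ k"
  shows "ln x \<le> real k"
proof -
  have "x \<le> exp (real k)" using assms(2) exp_nat_ge[of k] by linarith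
  hence "ln x \<le> ln (exp (real k))" using assms(1) by (subst ln_le_cancel_iff) auto
  thus ?thesis by simp
qed

lemma ln_ge_nat:
  assumes "(272/100::real) ^ k \<le> x"
  shows "real k \<le> ln x"
proof -
  have "exp (real k) \<le> x" using assms exp_nat_le[of k] by linarith
  moreover have "x > 0" using \<open>exp (real k) \<le> x\<close> exp_gt_zero[of "real k"] by linarith
  ultimately have "ln (exp (real k)) \<le> ln x" by (subst ln_le_cancel_iff) auto
  thus ?thesis by simp
qed

lemma sum_union_le:
  fixes f :: "'a \<Rightarrow> real"
  assumes "finite I" "\<And>i. i \<in> I \<Longrightarrow> finite (A i)" "\<And>x. f x \<ge> 0"
  shows "sum f (\<Union>i\<in>I. A i) \<le> (\<Sum>i\<in>I. sum f (A i))"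
  using assms(1,2)
proof (induction I rule: finite_induct)
  case empty thus ?case by simp
next
  case (insert i I)
  have "sum f (\<Union>j\<in>insert i I. A j) = sum f (A i \<union> (\<Union>j\<in>I. A j))" by simp
  also have "\<dots> \<le> sum f (A i) + sum f (\<Union>j\<in>I. A j)"
  proof -
    have "sum f (A i \<union> (\<Union>j\<in>I. A j)) = sum f (A i) + sum f (\<Union>j\<in>I. A j) - sum f (A i \<inter> (\<Union>j\<in>I. A j))"
      by (subst sum_Un) (use insert in auto)
    moreover have "sum f (A i \<inter> (\<Union>j\<in>I. A j)) \<ge> 0" by (rule sum_nonneg) (use assms(3) in auto)
    ultimately show ?thesis by linarith
  qed
  also have "\<dots> \<le> sum f (A i) + (\<Sum>j\<in>I. sum f (A j))" using insert by simp
  finally show ?case using insert by simp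
qed

definition A8 :: "nat set" where "A8 = {1,7,11,13,17,19,23,29}"

lemma residues30: "(d::nat) mod 30 \<in> A8 \<or> 2 dvd d \<or> 3 dvd d \<or> 5 dvd d"
proof -
  have "d mod 30 = 1 \<or> d mod 30 = 7 \<or> d mod 30 = 11 \<or> d mod 30 = 13 \<or> d mod 30 = 17 \<or>
        d mod 30 = 19 \<or> d mod 30 = 23 \<or> d mod 30 = 29 \<or> 2 dvd d \<or> 3 dvd d \<or> 5 dvd d" by presburger
  thus ?thesis unfolding A8_def by auto
qed

lemma Dn_sub:
  "Dn N \<subseteq> {2,3,5} \<union> (\<Union>a\<in>A8. {d. 2 \<le> d \<and> d \<le> N \<and> d mod 30 = a})"
proof
  fix d assume d: "d \<in> Dn N"
  show "d \<in> {2,3,5} \<union> (\<Union>a\<in>A8. {d. 2 \<le> d \<and> d \<le> N \<and> d mod 30 = a})"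
  proof (cases "d \<in> {2,3,5}")
    case False
    hence cop: "coprime d 30" using d unfolding Dn_def by auto
    have nd: "\<not> p dvd d" if "p dvd (30::nat)" "p \<noteq> 1" for p
    proof
      assume "p dvd d"
      from coprime_common_divisor[OF cop this that(1)] that(2) show False by simp
    qed
    have "\<not> 2 dvd d" "\<not> 3 dvd d" "\<not> 5 dvd d" by (rule nd; simp)+
    hence "d mod 30 \<in> A8" using residues30[of d] by blast
    thus ?thesis using d unfolding Dn_def by auto
  next
    case True thus ?thesis by blast
  qed
qed

lemma sum_Un_le2:
  fixes f :: "'a \<Rightarrow> real"
  assumes "finite A" "finite B" "\<And>x. f x \<ge> 0"
  shows "sum f (A \<union> B) \<le> sum f A + sum f B"
proof -
  have "sum f (A \<union> B) = sum f A + sum f B - sum f (A \<inter> B)" by (subst sum_Un) (use assms in auto)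
  moreover have "sum f (A \<inter> B) \<ge> 0" by (rule sum_nonneg) (use assms in auto)
  ultimately show ?thesis by linarith
qed

lemma tail2:
  fixes x0 :: real
  assumes "x0 > 15"
  shows "(\<Sum>i<K. 1 / (x0 + 30 * real i)^2) \<le> 1 / (30 * (x0 - 15)) - 1 / (30 * (x0 + 30 * real K - 15))"
proof (induction K)
  case 0 thus ?case by simp
next
  case (Suc K)
  define x where "x = x0 + 30 * real K"
  have x: "x > 15" unfolding x_def using assms by simp
  have "1 / x^2 \<le> 1 / (30 * (x - 15)) - 1 / (30 * (x + 15))"
  proof -
    have nz: "30 * (x - 15) \<noteq> 0" "30 * (x + 15) \<noteq> 0" using x by auto
    have "1 / (30 * (x - 15)) - 1 / (30 * (x + 15)) = (1 * (30 * (x + 15)) - 1 * (30 * (x - 15))) / (30 * (x - 15) * (30 * (x + 15)))"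
      by (rule diff_frac_eq[OF nz])
    also have "\<dots> = 900 / (900 * ((x - 15) * (x + 15)))" by (simp add: algebra_simps)
    also have "\<dots> = 1 / ((x - 15) * (x + 15))" by simp
    finally have "1 / (30 * (x - 15)) - 1 / (30 * (x + 15)) = 1 / ((x - 15) * (x + 15))" .
    moreover have "1 / x^2 \<le> 1 / ((x - 15) * (x + 15))"
    proof (rule divide_left_mono)
      show "(x - 15) * (x + 15) \<le> x^2" by (simp add: power2_eq_square algebra_simps)
      show "0 < x^2 * ((x - 15) * (x + 15))" using x by (intro mult_pos_pos) auto
    qed simp
    ultimately show ?thesis by simp
  qed
  moreover have "x + 15 = x0 + 30 * real (Suc K) - 15" unfolding x_def by simp
  ultimately show ?case using Suc unfolding x_def by simp
qed

lemma log_step: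
  fixes x :: real
  assumes "x > 30"
  shows "1 / x \<le> (ln x - ln (x - 30)) / 30"
proof -
  have "ln ((x - 30) / x) \<le> (x - 30) / x - 1" using assms by (intro ln_le_minus_one) auto
  moreover have "ln ((x - 30) / x) = ln (x - 30) - ln x" using assms by (simp add: ln_div)
  moreover have "(x - 30) / x - 1 = - 30 / x" using assms by (simp add: field_simps)
  ultimately have "30 / x \<le> ln x - ln (x - 30)" by simp
  thus ?thesis by simp
qed

lemma tail1:
  fixes a :: real
  assumes "a > 0"
  shows "(\<Sum>i<K. 1 / (30 * (real i + 1) + a)) \<le> (ln (30 * real K + a) - ln a) / 30"
proof (induction K)
  case 0 thus ?case by simp
next
  case (Suc K)
  have "1 / (30 * (real K + 1) + a) \<le> (ln (30 * (real K + 1) + a) - ln (30 * (real K + 1) + a - 30)) / 30"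
    using assms by (intro log_step) auto
  moreover have "30 * (real K + 1) + a - 30 = 30 * real K + a" by simp
  ultimately show ?case using Suc by (simp add: field_simps)
qed

definition Ccl :: "nat \<Rightarrow> nat \<Rightarrow> nat set" where
  "Ccl a N = {d. 2 \<le> d \<and> d \<le> N \<and> d mod 30 = a}"

lemma finite_Ccl: "finite (Ccl a N)" unfolding Ccl_def by (rule finite_subset[of _ "{..N}"]) auto

lemma class_S2:
  assumes "a \<in> A8"
  shows "(\<Sum>d\<in>Ccl a N. 1 / (real d)^2) \<le> (if a \<ge> 2 then 1 / (real a)^2 else 0) + 1 / (30 + real a)^2 + 1 / (30 * (45 + real a))"
proof -
  have a: "1 \<le> a" "a < 30" using assms unfolding A8_def by auto
  define f where "f = (\<lambda>d::nat. 1 / (real d)^2)"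
  have f0: "f x \<ge> 0" for x unfolding f_def by simp
  define A0 where "A0 = (if a \<ge> 2 then {a} else {})"
  define T where "T = (\<lambda>i. 30 * i + (60 + a)) ` {..<N}"
  have sub: "Ccl a N \<subseteq> A0 \<union> {30 + a} \<union> T"
  proof
    fix d assume "d \<in> Ccl a N"
    hence d: "2 \<le> d" "d \<le> N" "d mod 30 = a" unfolding Ccl_def by auto
    have deq: "d = 30 * (d div 30) + a" using d(3) by (metis mult_div_mod_eq)
    consider "d div 30 = 0" | "d div 30 = 1" | "d div 30 \<ge> 2" by linarith
    thus "d \<in> A0 \<union> {30 + a} \<union> T"
    proof cases
      case 1 thus ?thesis using deq d unfolding A0_def by auto
    next
      case 2 thus ?thesis using deq by auto
    next
      case 3
      define i where "i = d div 30 - 2"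
      have "d = 30 * i + (60 + a)" using deq 3 unfolding i_def by simp
      moreover have "i < N" using d \<open>d = 30 * i + (60 + a)\<close> by simp
      ultimately show ?thesis unfolding T_def by auto
    qed
  qed
  have "sum f (Ccl a N) \<le> sum f (A0 \<union> {30 + a} \<union> T)"
    by (rule sum_mono2[OF _ sub]) (auto simp: A0_def T_def f0)
  also have "\<dots> \<le> sum f (A0 \<union> {30 + a}) + sum f T"
    by (rule sum_Un_le2) (auto simp: A0_def T_def f0)
  also have "sum f (A0 \<union> {30 + a}) \<le> sum f A0 + sum f {30 + a}"
    by (rule sum_Un_le2) (auto simp: A0_def f0)
  also have "sum f T = (\<Sum>i<N. 1 / ((60 + real a) + 30 * real i)^2)"
    unfolding T_def f_def by (subst sum.reindex) (auto simp: inj_on_def algebra_simps)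
  also have "\<dots> \<le> 1 / (30 * ((60 + real a) - 15)) - 1 / (30 * ((60 + real a) + 30 * real N - 15))"
    by (rule tail2) simp
  also have "\<dots> \<le> 1 / (30 * (45 + real a))" by simp
  finally have X: "sum f (Ccl a N) \<le> sum f A0 + sum f {30 + a} + 1 / (30 * (45 + real a))" by simp
  have sA0: "sum f A0 = (if a \<ge> 2 then 1 / (real a)^2 else 0)" unfolding A0_def f_def by simp
  have s30: "sum f {30 + a} = 1 / (30 + real a)^2" unfolding f_def by simp
  show ?thesis using X unfolding sA0 s30 unfolding f_def .
qed

lemma class_S1:
  assumes "a \<in> A8" "N \<ge> 30"
  shows "(\<Sum>d\<in>Ccl a N. 1 / real d) \<le> (if a \<ge> 2 then 1 / real a else 0) + (ln (real N) - ln (real a)) / 30"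
proof -
  have a: "1 \<le> a" "a < 30" using assms unfolding A8_def by auto
  define f where "f = (\<lambda>d::nat. 1 / real d)"
  have f0: "f x \<ge> 0" for x unfolding f_def by simp
  define A0 where "A0 = (if a \<ge> 2 then {a} else {})"
  define K where "K = (N - a) div 30"
  define T where "T = (\<lambda>i. 30 * (i + 1) + a) ` {..<K}"
  have sub: "Ccl a N \<subseteq> A0 \<union> T"
  proof
    fix d assume "d \<in> Ccl a N"
    hence d: "2 \<le> d" "d \<le> N" "d mod 30 = a" unfolding Ccl_def by auto
    have deq: "d = 30 * (d div 30) + a" using d(3) by (metis mult_div_mod_eq)
    show "d \<in> A0 \<union> T"
    proof (cases "d div 30 = 0")
      case True thus ?thesis using deq d unfolding A0_def by auto
    next
      case False
      define i where "i = d div 30 - 1"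
      have di: "d = 30 * (i + 1) + a" using deq False unfolding i_def by simp
      hence "30 * (i + 1) \<le> N - a" using d by simp
      hence "i + 1 \<le> K" unfolding K_def by (simp add: less_eq_div_iff_mult_less_eq mult.commute)
      thus ?thesis using di unfolding T_def by auto
    qed
  qed
  have KN: "30 * real K + real a \<le> real N"
  proof -
    have "30 * K \<le> N - a" unfolding K_def by simp
    thus ?thesis using a assms(2) by linarith
  qed
  have "sum f (Ccl a N) \<le> sum f (A0 \<union> T)"
    by (rule sum_mono2[OF _ sub]) (auto simp: A0_def T_def f0)
  also have "\<dots> \<le> sum f A0 + sum f T"
    by (rule sum_Un_le2) (auto simp: A0_def T_def f0)
  also have "sum f T = (\<Sum>i<K. 1 / (30 * (real i + 1) + real a))"
    unfolding T_def f_def by (subst sum.reindex) (auto simp: inj_on_def algebra_simps)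
  also have "\<dots> \<le> (ln (30 * real K + real a) - ln (real a)) / 30"
    by (rule tail1) (use a in simp)
  also have "\<dots> \<le> (ln (real N) - ln (real a)) / 30"
    using KN a by (simp add: divide_right_mono)
  finally have X: "sum f (Ccl a N) \<le> sum f A0 + (ln (real N) - ln (real a)) / 30" by simp
  have sA0: "sum f A0 = (if a \<ge> 2 then 1 / real a else 0)" unfolding A0_def f_def by simp
  show ?thesis using X unfolding sA0 unfolding f_def .
qed

lemma Dn_sub2: "Dn N \<subseteq> {2,3,5} \<union> (\<Union>a\<in>A8. Ccl a N)"
  using Dn_sub unfolding Ccl_def .

lemma sum_Dn_le:
  fixes f :: "nat \<Rightarrow> real"
  assumes "\<And>x. f x \<ge> 0"
  shows "sum f (Dn N) \<le> f 2 + f 3 + f 5 + (\<Sum>a\<in>A8. sum f (Ccl a N))"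
proof -
  have finA8: "finite A8" unfolding A8_def by simp
  have "sum f (Dn N) \<le> sum f ({2,3,5} \<union> (\<Union>a\<in>A8. Ccl a N))"
    by (rule sum_mono2[OF _ Dn_sub2]) (use finA8 finite_Ccl assms in auto)
  also have "\<dots> \<le> sum f {2,3,5} + sum f (\<Union>a\<in>A8. Ccl a N)"
    by (rule sum_Un_le2) (use finA8 finite_Ccl assms in auto)
  also have "sum f (\<Union>a\<in>A8. Ccl a N) \<le> (\<Sum>a\<in>A8. sum f (Ccl a N))"
    by (rule sum_union_le[OF finA8 finite_Ccl assms])
  finally show ?thesis by simp
qed

lemma S2_bound: "S2 N \<le> 227 / 500"
proof -
  have "S2 N \<le> 1/4 + 1/9 + 1/25 + (\<Sum>a\<in>A8. (if a \<ge> 2 then 1 / (real a)^2 else 0) + 1 / (30 + real a)^2 + 1 / (30 * (45 + real a)))"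
  proof -
    have "S2 N \<le> 1 / (real 2)^2 + 1 / (real 3)^2 + 1 / (real 5)^2 + (\<Sum>a\<in>A8. \<Sum>d\<in>Ccl a N. 1 / (real d)^2)"
      unfolding S2_def by (rule sum_Dn_le) simp
    also have "(\<Sum>a\<in>A8. \<Sum>d\<in>Ccl a N. 1 / (real d)^2) \<le> (\<Sum>a\<in>A8. (if a \<ge> 2 then 1 / (real a)^2 else 0) + 1 / (30 + real a)^2 + 1 / (30 * (45 + real a)))"
      by (rule sum_mono) (rule class_S2)
    finally show ?thesis by simp
  qed
  also have "\<dots> \<le> 227 / 500" unfolding A8_def by simp
  finally show ?thesis .
qed

lemma S1_bound:
  assumes "N \<ge> 30"
  shows "S1 N \<le> 8 / 30 * ln (real N) + 91 / 100"
proof -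
  have "S1 N \<le> 1 / real 2 + 1 / real 3 + 1 / real 5 + (\<Sum>a\<in>A8. \<Sum>d\<in>Ccl a N. 1 / real d)"
    unfolding S1_def by (rule sum_Dn_le) simp
  also have "(\<Sum>a\<in>A8. \<Sum>d\<in>Ccl a N. 1 / real d) \<le> (\<Sum>a\<in>A8. (if a \<ge> 2 then 1 / real a else 0) + (ln (real N) - ln (real a)) / 30)"
    by (rule sum_mono) (rule class_S1[OF _ assms])
  also have "\<dots> = (\<Sum>a\<in>A8. (if a \<ge> 2 then 1 / real a else 0)) + 8 / 30 * ln (real N) - (\<Sum>a\<in>A8. ln (real a)) / 30"
  proof -
    have "card A8 = 8" unfolding A8_def by simp
    thus ?thesis by (simp add: sum.distrib sum_subtractf sum_divide_distrib[symmetric])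
  qed
  also have "(\<Sum>a\<in>A8. ln (real a)) = ln (\<Prod>a\<in>A8. real a)"
    by (rule ln_prod[symmetric]) (auto simp: A8_def)
  also have "(\<Prod>a\<in>A8. real a) = 215656441" unfolding A8_def by simp
  also have "(\<Sum>a\<in>A8. (if a \<ge> 2 then 1 / real a else 0)) = 1/7 + 1/11 + 1/13 + 1/17 + 1/19 + 1/23 + 1/29"
    unfolding A8_def by simp
  finally have X: "S1 N \<le> 1 / real 2 + 1 / real 3 + 1 / real 5 + (1/7 + 1/11 + 1/13 + 1/17 + 1/19 + 1/23 + 1/29 + 8 / 30 * ln (real N) - ln 215656441 / 30)"
    by simp
  have "real (19::nat) \<le> ln (215656441::real)" by (rule ln_ge_nat) (simp add: power_divide divide_le_eq)
  thus ?thesis using X by simp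
qed

lemma exists_Q:
  fixes m n :: int
  assumes "n > 0" "n \<le> m"
  shows "\<exists>Q. Q \<ge> 1 \<and> Q * Q * n \<le> m \<and> m < (Q + 1) * (Q + 1) * n"
proof -
  define S where "S = {Q::int. 1 \<le> Q \<and> Q \<le> m \<and> Q * Q * n \<le> m}"
  have finS: "finite S" unfolding S_def by (rule finite_subset[of _ "{1..m}"]) auto
  have 1: "1 \<in> S" unfolding S_def using assms by auto
  define Q where "Q = Max S"
  have QS: "Q \<in> S" unfolding Q_def using finS 1 by (intro Max_in) auto
  have "Q + 1 \<notin> S"
  proof
    assume "Q + 1 \<in> S"
    hence "Q + 1 \<le> Q" unfolding Q_def using finS by (intro Max_ge) auto
    thus False by simp
  qed
  hence "\<not> (Q + 1 \<le> m \<and> (Q + 1) * (Q + 1) * n \<le> m)" using QS unfolding S_def by auto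
  moreover have "Q + 1 \<le> (Q + 1) * (Q + 1) * n"
  proof -
    have "1 * 1 \<le> (Q + 1) * n" using QS assms unfolding S_def by (intro mult_mono) auto
    hence "1 \<le> (Q + 1) * n" by simp
    hence "(Q + 1) * 1 \<le> (Q + 1) * ((Q + 1) * n)" using QS unfolding S_def by (intro mult_left_mono) auto
    thus ?thesis by (simp add: mult.assoc)
  qed
  ultimately have "m < (Q + 1) * (Q + 1) * n" by linarith
  thus ?thesis using QS unfolding S_def by auto
qed

lemma div_bounds:
  fixes x m :: int
  assumes "m > 0"
  shows "m * (x div m) \<le> x" "x < m * (x div m) + m"
proof -
  have "m * (x div m) + x mod m = x" by (rule mult_div_mod_eq)
  moreover have "0 \<le> x mod m" "x mod m < m" using assms by auto
  ultimately show "m * (x div m) \<le> x" "x < m * (x div m) + m" by linarith+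
qed

lemma dirichlet:
  fixes m e Q :: int
  assumes "m > 0" "Q \<ge> 1"
  shows "\<exists>q r. 1 \<le> q \<and> q \<le> Q \<and> Q * \<bar>q * e - r * m\<bar> < m"
proof -
  define f where "f = (\<lambda>j::int. (Q * ((j * e) mod m)) div m)"
  have fr: "f j \<in> {0..Q-1}" for j
  proof -
    have a: "0 \<le> (j * e) mod m" "(j * e) mod m < m" using assms by auto
    have "0 \<le> Q * ((j * e) mod m)" using a assms by simp
    hence "0 \<le> f j" unfolding f_def using assms by (simp add: pos_imp_zdiv_nonneg_iff)
    moreover have "Q * ((j * e) mod m) < Q * m" using a assms by simp
    hence "m * (Q * ((j * e) mod m) div m) < m * Q" using div_bounds(1)[OF assms(1), of "Q * ((j * e) mod m)"] by (simp add: mult.commute)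
    hence "Q * ((j * e) mod m) div m < Q" using assms(1) by simp
    ultimately show ?thesis unfolding f_def by simp
  qed
  have "\<not> inj_on f {0..Q}"
  proof
    assume "inj_on f {0..Q}"
    hence "card {0..Q} \<le> card {0..Q-1}" by (rule card_inj_on_le) (use fr in auto)
    thus False using assms by simp
  qed
  then obtain j1 j2 where j: "j1 \<in> {0..Q}" "j2 \<in> {0..Q}" "j1 \<noteq> j2" "f j1 = f j2"
    unfolding inj_on_def by blast
  have main: "\<exists>q r. 1 \<le> q \<and> q \<le> Q \<and> Q * \<bar>q * e - r * m\<bar> < m"
    if "i1 \<in> {0..Q}" "i2 \<in> {0..Q}" "i1 < i2" "f i1 = f i2" for i1 i2
  proof -
    define a1 where "a1 = (i1 * e) mod m"
    define a2 where "a2 = (i2 * e) mod m"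
    define b where "b = f i1"
    have b1: "m * b \<le> Q * a1" "Q * a1 < m * b + m"
      unfolding b_def f_def a1_def using div_bounds[OF assms(1)] by auto
    have bb: "b = (Q * ((i2 * e) mod m)) div m" using that(4) unfolding b_def f_def by simp
    have b2: "m * b \<le> Q * a2" "Q * a2 < m * b + m"
      unfolding bb a2_def using div_bounds[OF assms(1)] by auto
    define q where "q = i2 - i1"
    define r where "r = (i2 * e) div m - (i1 * e) div m"
    have e1: "a1 = i1 * e - m * ((i1 * e) div m)" unfolding a1_def using mult_div_mod_eq[of m "i1 * e"] by linarith
    have e2: "a2 = i2 * e - m * ((i2 * e) div m)" unfolding a2_def using mult_div_mod_eq[of m "i2 * e"] by linarith
    have "q * e - r * m = a2 - a1" unfolding q_def r_def e1 e2 by (simp add: algebra_simps)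
    moreover have "\<bar>Q * a2 - Q * a1\<bar> = \<bar>Q\<bar> * \<bar>a2 - a1\<bar>" by (simp add: abs_mult[symmetric] right_diff_distrib)
    ultimately have "Q * \<bar>q * e - r * m\<bar> = \<bar>Q * a2 - Q * a1\<bar>" using assms by simp
    also have "\<dots> < m" using b1 b2 by linarith
    finally have "Q * \<bar>q * e - r * m\<bar> < m" .
    moreover have "1 \<le> q" "q \<le> Q" unfolding q_def using that by auto
    ultimately show ?thesis by blast
  qed
  show ?thesis
  proof (cases "j1 < j2")
    case True show ?thesis using main[OF j(1,2) True j(4)] .
  next
    case False
    hence "j2 < j1" using j(3) by simp
    thus ?thesis using main[OF j(2,1) _ j(4)[symmetric]] by blast
  qed
qed

lemma coprime_reduce:
  fixes q r e m Q :: int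
  assumes "1 \<le> q" "Q * \<bar>q * e - r * m\<bar> < m" "Q \<ge> 1"
  shows "\<exists>q' r'. 1 \<le> q' \<and> q' \<le> q \<and> coprime q' r' \<and> Q * \<bar>q' * e - r' * m\<bar> < m"
proof -
  have g0: "gcd q r \<noteq> 0" using assms by auto
  obtain q' r' where qr: "q = q' * gcd q r" "r = r' * gcd q r" "coprime q' r'"
    using gcd_coprime_exists[OF g0] by blast
  have gp: "gcd q r \<ge> 1" using g0 by (simp add: int_one_le_iff_zero_less)
  have q'p: "q' > 0"
  proof (rule ccontr)
    assume "\<not> q' > 0"
    hence "q' * gcd q r \<le> 0" using gp by (intro mult_nonpos_nonneg) auto
    thus False using qr(1) assms(1) by simp
  qed
  have "q' * 1 \<le> q' * gcd q r" using q'p gp by (intro mult_left_mono) auto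
  hence q'q: "q' \<le> q" using qr(1) by simp
  have "q * e - r * m = gcd q r * (q' * e - r' * m)" using qr by (simp add: algebra_simps)
  hence "\<bar>q * e - r * m\<bar> = gcd q r * \<bar>q' * e - r' * m\<bar>" by (simp add: abs_mult)
  moreover have "1 * \<bar>q' * e - r' * m\<bar> \<le> gcd q r * \<bar>q' * e - r' * m\<bar>" using gp by (intro mult_right_mono) auto
  ultimately have "\<bar>q' * e - r' * m\<bar> \<le> \<bar>q * e - r * m\<bar>" by simp
  hence "Q * \<bar>q' * e - r' * m\<bar> \<le> Q * \<bar>q * e - r * m\<bar>" using assms(3) by (intro mult_left_mono) auto
  hence "Q * \<bar>q' * e - r' * m\<bar> < m" using assms(2) by linarith
  thus ?thesis using q'p q'q qr(3) by (intro exI[of _ q'] exI[of _ r']) auto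
qed

lemma caseA_num:
  fixes M N P C S2v S1v L :: real
  assumes M: "M \<ge> 300" and N: "N \<ge> 300" and P: "P \<ge> (M - 1) * (N / 2 - 1)"
    and C: "C \<le> N * M / 2 * S2v + (M - 1) * S1v"
    and S2: "S2v \<le> 227/500" and S1: "S1v \<le> 8/30 * L + 91/100" and Lb: "L \<le> 12 \<or> L \<le> N / 300 + 5"
  shows "P - C > M * N / 4"
proof -
  have "(M - 1) * (N / 2 - 1) = M * N / 2 - M - N / 2 + 1" by (simp add: field_simps)
  hence P': "P \<ge> M * N / 2 - M - N / 2 + 1" using P by linarith
  have c1: "N * M / 2 * S2v \<le> N * M / 2 * (227/500)" using M N S2 by (intro mult_left_mono) auto
  hence c1': "N * M / 2 * S2v \<le> 227/1000 * (M * N)" by (simp add: algebra_simps)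
  from Lb show ?thesis
  proof
    assume L: "L \<le> 12"
    have "S1v \<le> 411/100" using S1 L by linarith
    hence "(M - 1) * S1v \<le> (M - 1) * (411/100)" using M by (intro mult_left_mono) auto
    hence c2: "(M - 1) * S1v \<le> 411/100 * M - 411/100" by (simp add: algebra_simps)
    have "M * (23/1000 * N - 511/100) \<ge> 300 * (23/1000 * N - 511/100)" using M N by (intro mult_right_mono) auto
    hence k: "23/1000 * (M * N) - 511/100 * M \<ge> 69/10 * N - 1533" by (simp add: algebra_simps)
    show ?thesis using P' C c1' c2 k N by linarith
  next
    assume L: "L \<le> N / 300 + 5"
    have "S1v \<le> 8/9000 * N + 8/30 * 5 + 91/100" using S1 L by linarith
    hence "(M - 1) * S1v \<le> (M - 1) * (8/9000 * N + 8/30 * 5 + 91/100)" using M by (intro mult_left_mono) auto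
    also have "\<dots> \<le> M * (8/9000 * N + 8/30 * 5 + 91/100)" using N by (intro mult_right_mono) auto
    finally have c2: "(M - 1) * S1v \<le> 8/9000 * (M * N) + 673/300 * M" by (simp add: algebra_simps)
    have "M * (2211/100000 * N - 32434/10000) \<ge> 300 * (2211/100000 * N - 32434/10000)" using M N by (intro mult_right_mono) auto
    hence k: "2211/100000 * (M * N) - 32434/10000 * M \<ge> 6633/1000 * N - 97302/100" by (simp add: algebra_simps)
    have "M * N \<ge> 0" using M N by simp
    thus ?thesis using P' C c1' c2 k N M by linarith
  qed
qed

lemma ln_300_le: "ln (300::real) \<le> 6"
proof -
  have "ln (300::real) \<le> real (6::nat)" by (rule ln_le_nat) (simp_all add: power_divide le_divide_eq)
  thus ?thesis by simp
qed

lemma ln_17320_le: "ln (17320::real) \<le> 10"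
proof -
  have "ln (17320::real) \<le> real (10::nat)" by (rule ln_le_nat) (simp_all add: power_divide le_divide_eq)
  thus ?thesis by simp
qed

lemma ln_160000_le: "ln (160000::real) \<le> 12"
proof -
  have "ln (160000::real) \<le> real (12::nat)" by (rule ln_le_nat) (simp_all add: power_divide le_divide_eq)
  thus ?thesis by simp
qed

lemma ln_tangent:
  fixes x a :: real
  assumes "x > 0" "a > 0"
  shows "ln x \<le> ln a + x / a - 1"
proof -
  have "ln (x / a) \<le> x / a - 1" using assms by (intro ln_le_minus_one) auto
  moreover have "ln (x / a) = ln x - ln a" using assms by (simp add: ln_div)
  ultimately show ?thesis by simp
qed

lemma lnN_bound:
  fixes N :: real
  assumes "N \<ge> 300"
  shows "ln N \<le> N / 300 + 5"
  using ln_tangent[of N 300] ln_300_le assms by simp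

lemma ln_ratio:
  fixes N W :: real
  assumes "N \<ge> 300" "W \<ge> N"
  shows "N * ln W \<le> W * ln N"
proof -
  have "ln W \<le> ln N + W / N - 1" using ln_tangent[of W N] assms by simp
  hence "N * ln W \<le> N * (ln N + W / N - 1)" using assms by (intro mult_left_mono) auto
  also have "\<dots> = N * ln N + (W - N)" using assms by (simp add: field_simps)
  also have "W - N \<le> (W - N) * ln N"
  proof -
    have "ln N \<ge> 1"
    proof -
      have "exp 1 \<le> N" using e_less_272 assms by linarith
      hence "ln (exp 1) \<le> ln N" using assms by (subst ln_le_cancel_iff) auto
      thus ?thesis by simp
    qed
    thus ?thesis using assms mult_left_mono[of 1 "ln N" "W - N"] by simp
  qed
  finally show ?thesis by (simp add: algebra_simps)
qed

lemma caseB_num: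
  fixes M N W X P C S2v S1v Lw :: real
  assumes N: "N \<ge> 300" and M: "M > 160000" and MN: "M > N" and W1: "W \<ge> N" and W2: "W \<le> 5 * X"
    and X1: "X * X \<le> M * N" and X2: "4 * (X * X) > M * N" and X0: "X \<ge> 0"
    and P: "P \<ge> (M - 1) * (N / 2 - 1)"
    and C: "C \<le> M * N / W + 1 + (P + W) * S2v + (M * N / W + W) * S1v"
    and S2a: "0 \<le> S2v" and S2b: "S2v \<le> 227/500" and S1: "S1v \<le> 8/30 * Lw + 91/100" and Lw: "Lw \<le> ln W"
  shows "P - C > M * N / 4"
proof -
  have Wp: "W > 0" using W1 N by simp
  have MNp: "M * N \<ge> 160000 * 300" using M N by (intro mult_mono) auto
  have X3464: "X \<ge> 3464"
  proof (rule ccontr)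
    assume "\<not> X \<ge> 3464"
    hence "X * X \<le> 3464 * 3464" using X0 by (intro mult_mono) auto
    thus False using X2 MNp by simp
  qed
  have "(M - 1) * (N / 2 - 1) = M * N / 2 - M - N / 2 + 1" by (simp add: field_simps)
  hence P': "P \<ge> M * N / 2 - M - N / 2 + 1" using P by linarith
  have Pp: "P \<ge> 0"
  proof -
    have "(M - 1) * (N / 2 - 1) \<ge> 0" using M N by (intro mult_nonneg_nonneg) auto
    thus ?thesis using P by linarith
  qed
  have t1: "(P + W) * S2v \<le> (P + W) * (227/500)" using Pp Wp S2b by (intro mult_left_mono) auto
  have t2: "M * N / W \<le> M"
  proof -
    have "M * N / W \<le> M * N / N" using W1 N M by (intro divide_left_mono) auto
    thus ?thesis using N by simp
  qed
  have lnW: "ln W \<le> 9 + X / 3464"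
  proof -
    have "ln W \<le> ln (5 * X)" using Wp W2 by (subst ln_le_cancel_iff) auto
    also have "\<dots> \<le> ln 17320 + 5 * X / 17320 - 1" using X3464 by (intro ln_tangent) auto
    finally show ?thesis using ln_17320_le by simp
  qed
  have mnw0: "M * N / W \<ge> 0" using M N Wp by simp
  have t3: "M * N / W * S1v \<le> 8/9000 * (M * N) + 673/300 * M"
  proof -
    have "M * N / W * S1v \<le> M * N / W * (8/30 * ln W + 91/100)"
      using S1 Lw mnw0 by (intro mult_left_mono) auto
    also have "\<dots> = 8/30 * (M * (N * ln W / W)) + 91/100 * (M * N / W)" using Wp by (simp add: field_simps)
    also have "N * ln W / W \<le> ln N"
      using ln_ratio[OF N W1] Wp by (simp add: divide_le_eq mult.commute)
    hence "M * (N * ln W / W) \<le> M * ln N" using M by (intro mult_left_mono) auto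
    hence "8/30 * (M * (N * ln W / W)) \<le> 8/30 * (M * (N / 300 + 5))"
      using lnN_bound[OF N] M mult_left_mono[of "ln N" "N / 300 + 5" M] by linarith
    also have "91/100 * (M * N / W) \<le> 91/100 * M" using t2 by simp
    finally show ?thesis by (simp add: algebra_simps)
  qed
  have t4: "W * S1v \<le> 331/100 * W + (W * X) / 12990"
  proof -
    have "8/30 * Lw \<le> 8/30 * (9 + X / 3464)" using Lw lnW by simp
    hence "S1v \<le> 331/100 + X / 12990" using S1 by simp
    hence "W * S1v \<le> W * (331/100 + X / 12990)"
      using Wp by (intro mult_left_mono) auto
    thus ?thesis by (simp add: algebra_simps)
  qed
  have t5: "W * X \<le> 5 * (X * X)" using W2 X0 mult_right_mono[of W "5 * X" X] by simp
  have t6: "X \<le> X * X / 3464" using X3464 by (simp add: field_simps)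
  have "M * (16293/1000000 * N - 37893/10000) \<ge> M * (48879/10000 - 37893/10000)"
    using M N by (intro mult_left_mono) auto
  hence k: "16293/1000000 * (M * N) - 37893/10000 * M \<ge> 10986/10000 * M" by (simp add: algebra_simps)
  have XX: "X * X \<le> M * N" by (rule X1)
  have e1: "(M * N / W + W) * S1v = M * N / W * S1v + W * S1v" by (simp add: algebra_simps)
  have e2: "(P + W) * (227 / 500) = 227 / 500 * P + 227 / 500 * W" by (simp add: algebra_simps)
  have e3: "X * X / 3464 = 1 / 3464 * (X * X)" by simp
  have e4: "W * X / 12990 = 1 / 12990 * (W * X)" by simp
  show ?thesis using P' C t1 t2 t3 t4 t5 t6 k XX W2 M MN N Pp X0 e1 e2 e3 e4 by linarith
qed

theorem mainTheorem13:
  fixes m n e :: int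
  assumes "m \<ge> 300" and "n \<ge> 300" and "0 \<le> e" and "e < m"
  shows "real (Nprim m n e) > measure lborel (tri m n e) / 2"
proof -
  have m0: "m > 0" and n0: "n > 0" using assms by auto
  have meas: "measure lborel (tri m n e) \<le> real_of_int m * real_of_int n / 2"
    by (rule measure_tri_le[OF m0 n0])
  define P where "P = real (card (LP m n e))"
  define C where "C = real (card (Pnon m n e))"
  have NP: "real (Nprim m n e) = P - C" unfolding P_def C_def by (rule Nprim_eq[OF m0 n0 assms(3,4)])
  have Pge: "P \<ge> (real_of_int m - 1) * (real_of_int n / 2 - 1)" unfolding P_def by (rule card_LP_ge[OF m0 n0 assms(3,4)])
  have M300: "real_of_int m \<ge> 300" and N300: "real_of_int n \<ge> 300" using assms by simp_all
  have key: "P - C > real_of_int m * real_of_int n / 4"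
  proof (cases "m \<le> 160000 \<or> m \<le> n")
    case True
    have Cle: "C \<le> real_of_int n * real_of_int m / 2 * S2 (nat (m - 1)) + (real_of_int m - 1) * S1 (nat (m - 1))"
      unfolding C_def by (rule caseA_nonprim[OF m0 n0 assms(3,4)])
    have n30: "nat (m - 1) \<ge> 30" using assms by simp
    have rl: "real (nat (m - 1)) = real_of_int m - 1" using assms by simp
    have S1b: "S1 (nat (m - 1)) \<le> 8/30 * ln (real_of_int m - 1) + 91/100"
      using S1_bound[OF n30] unfolding rl .
    have Lb: "ln (real_of_int m - 1) \<le> 12 \<or> ln (real_of_int m - 1) \<le> real_of_int n / 300 + 5"
    proof (cases "m \<le> 160000")
      case True
      have "ln (real_of_int m - 1) \<le> ln 160000" using True assms by (subst ln_le_cancel_iff) auto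
      thus ?thesis using ln_160000_le by simp
    next
      case False
      hence "m \<le> n" using \<open>m \<le> 160000 \<or> m \<le> n\<close> by simp
      hence "ln (real_of_int m - 1) \<le> ln (real_of_int n)" using assms by (subst ln_le_cancel_iff) auto
      thus ?thesis using lnN_bound[OF N300] by simp
    qed
    show ?thesis by (rule caseA_num[OF M300 N300 Pge Cle S2_bound S1b Lb])
  next
    case False
    hence mbig: "m > 160000" "m > n" by auto
    obtain Q where Q: "Q \<ge> 1" "Q * Q * n \<le> m" "m < (Q + 1) * (Q + 1) * n"
      using exists_Q[OF n0] mbig by (meson less_imp_le)
    obtain q0 r0 where qr0: "1 \<le> q0" "q0 \<le> Q" "Q * \<bar>q0 * e - r0 * m\<bar> < m"
      using dirichlet[OF m0 Q(1), of e] by blast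
    obtain q r where qr: "1 \<le> q" "q \<le> q0" "coprime q r" "Q * \<bar>q * e - r * m\<bar> < m"
      using coprime_reduce[OF qr0(1,3) Q(1)] by blast
    define W where "W = max 0 (max (n * q) (q * e - r * m)) - min 0 (min (n * q) (q * e - r * m))"
    have Cle: "C \<le> real_of_int m * real_of_int n / real_of_int W + 1
           + (P + real_of_int W) * S2 (nat (W - 1))
           + (real_of_int m * real_of_int n / real_of_int W + real_of_int W) * S1 (nat (W - 1))"
      unfolding C_def P_def W_def by (rule caseB_nonprim[OF m0 n0 assms(3,4) qr(1,3)])
    have nq: "n * q \<ge> n" using n0 qr(1) by simp
    have Wge: "W \<ge> n * q" unfolding W_def by auto
    have Wle: "W \<le> n * q + \<bar>q * e - r * m\<bar>" unfolding W_def using n0 qr(1) by (auto simp: max_def min_def)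
    have QQ: "(Q + 1) * (Q + 1) \<le> 4 * (Q * Q)"
    proof -
      have "(Q + 1) * (Q + 1) \<le> (2 * Q) * (2 * Q)" using Q(1) by (intro mult_mono) auto
      thus ?thesis by (simp add: algebra_simps)
    qed
    have dlt: "Q * \<bar>q * e - r * m\<bar> < 4 * (Q * Q) * n"
    proof -
      have "(Q + 1) * (Q + 1) * n \<le> 4 * (Q * Q) * n" using QQ n0 by (intro mult_right_mono) auto
      thus ?thesis using qr(4) Q(3) by linarith
    qed
    have W5: "W < 5 * (n * Q)"
    proof -
      have "Q * W \<le> Q * (n * q + \<bar>q * e - r * m\<bar>)" using Wle Q(1) by (intro mult_left_mono) auto
      also have "\<dots> = Q * (n * q) + Q * \<bar>q * e - r * m\<bar>" by (simp add: algebra_simps)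
      also have "Q * (n * q) \<le> Q * (n * Q)" using qr(1,2) qr0(2) n0 Q(1) by (intro mult_left_mono) auto
      finally have "Q * W < Q * (n * Q) + 4 * (Q * Q) * n" using dlt by linarith
      hence "Q * W < Q * (5 * (n * Q))" by (simp add: algebra_simps)
      thus ?thesis using Q(1) by simp
    qed
    define X where "X = real_of_int (n * Q)"
    have X0: "X \<ge> 0" unfolding X_def using n0 Q(1) by simp
    have "real_of_int W \<le> real_of_int (5 * (n * Q))" by (subst of_int_le_iff) (use W5 in linarith)
    hence W5r: "real_of_int W \<le> 5 * X" unfolding X_def by simp
    have W1r: "real_of_int W \<ge> real_of_int n" using Wge nq by simp
    have X1: "X * X \<le> real_of_int m * real_of_int n"
    proof -
      have "(n * Q) * (n * Q) = (Q * Q * n) * n" by (simp add: algebra_simps)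
      also have "\<dots> \<le> m * n" using Q(2) n0 by (intro mult_right_mono) auto
      finally have "(n * Q) * (n * Q) \<le> m * n" .
      hence "real_of_int ((n * Q) * (n * Q)) \<le> real_of_int (m * n)" by (simp only: of_int_le_iff)
      thus ?thesis unfolding X_def by simp
    qed
    have X2: "4 * (X * X) > real_of_int m * real_of_int n"
    proof -
      have "m * n < (Q + 1) * (Q + 1) * n * n" using Q(3) n0 by (intro mult_strict_right_mono) auto
      also have "\<dots> \<le> 4 * (Q * Q) * n * n" using QQ n0 by (intro mult_right_mono) auto
      also have "\<dots> = 4 * ((n * Q) * (n * Q))" by (simp add: algebra_simps)
      finally have "m * n < 4 * ((n * Q) * (n * Q))" .
      hence "real_of_int (m * n) < real_of_int (4 * ((n * Q) * (n * Q)))" by (simp only: of_int_less_iff)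
      thus ?thesis unfolding X_def by simp
    qed
    have Wn: "W \<ge> n" using Wge nq by linarith
    have W30: "nat (W - 1) \<ge> 30" using Wn assms by simp
    have rlW: "real (nat (W - 1)) = real_of_int W - 1" using Wn assms by simp
    have S1b: "S1 (nat (W - 1)) \<le> 8/30 * ln (real_of_int W - 1) + 91/100"
      using S1_bound[OF W30] unfolding rlW .
    have Lw: "ln (real_of_int W - 1) \<le> ln (real_of_int W)" using Wn assms by (subst ln_le_cancel_iff) auto
    have S2a: "0 \<le> S2 (nat (W - 1))" unfolding S2_def by (rule sum_nonneg) simp
    show ?thesis
      by (rule caseB_num[OF N300 _ _ W1r W5r X1 X2 X0 Pge Cle S2a S2_bound S1b Lw]) (use mbig in simp_all)
  qed
  show ?thesis using NP key meas by linarith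
qed

end
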